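(* Let $k$ be a field, let $A$ be a torsion-free abelian group of finite rank acted upon by a group $\Gamma$, and let $P$ be a faithful prime ideal of $kA$. Then: (i) $r(c(P))=r(c(kB\cap P))$ for every dense subgroup $B$ of $A$, where $c(kB\cap P)$ is the controller of the ideal $kB\cap P$ of $kB$ (as a subgroup of $B$); (ii) if $S_\Gamma(P)=\Gamma$, then $\operatorname{is}_A c(P)$ is a $\Gamma$-invariant subgroup of $A$.
   Context: $\Gamma$ acts on $A$ by automorphisms, and this action extends to $kA$; $I^\gamma$ is the image of an ideal $I$ under $\gamma$. An ideal $I$ of $kA$ is faithful if $A\cap(1+I)=\{1\}$; a subgroup $H$ controls $I$ if $I=(I\cap kH)kA$; the controller $c(I)$ is the intersection of all subgroups controlling $I$. $r(X)$ is the torsion-free rank of an abelian group $X$. For $B\le A$, $\operatorname{is}_A(B)=\{a\in A: a^n\in B \text{ for some } n\ge1\}$; $B$ is dense if $\operatorname{is}_A(B)=A$. The standardiser $S_\Gamma(I)$ is the set of $\gamma\in\Gamma$ such that $I\cap kB=I^\gamma\cap kB$ for some finitely generated dense subgroup $B$ of $A$. *)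

theory Defs
  imports "HOL-Library.Poly_Mapping" "HOL-Algebra.Group"
begin

(* The abelian group A is the whole type 'a (written additively); its group algebra kA
  is the type of finitely supported functions ('a \<Rightarrow>\<^sub>0 'k) with convolution product.
  The element a of A corresponds to Poly_Mapping.single a 1. *)

definition nmult :: "nat \<Rightarrow> 'a::ab_group_add \<Rightarrow> 'a" where
  "nmult n a = (((+) a) ^^ n) 0"

definition zmult :: "int \<Rightarrow> 'a::ab_group_add \<Rightarrow> 'a" where
  "zmult z a = (if 0 \<le> z then nmult (nat z) a else - nmult (nat (- z)) a)"

definition subgrp :: "'a::ab_group_add set \<Rightarrow> bool" where
  "subgrp H \<longleftrightarrow> 0 \<in> H \<and> (\<forall>x\<in>H. \<forall>y\<in>H. x - y \<in> H)"

definition gen_subgrp :: "'a::ab_group_add set \<Rightarrow> 'a set" where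
  "gen_subgrp F = \<Inter>{H. subgrp H \<and> F \<subseteq> H}"

definition fin_gen :: "'a::ab_group_add set \<Rightarrow> bool" where
  "fin_gen B \<longleftrightarrow> (\<exists>F. finite F \<and> B = gen_subgrp F)"

definition torsion_free :: "'a::ab_group_add set \<Rightarrow> bool" where
  "torsion_free X \<longleftrightarrow> (\<forall>a\<in>X. \<forall>n. n > 0 \<longrightarrow> nmult n a = 0 \<longrightarrow> a = 0)"

definition z_indep :: "'a::ab_group_add set \<Rightarrow> bool" where
  "z_indep F \<longleftrightarrow> (\<forall>c. (\<Sum>x\<in>F. zmult (c x) x) = 0 \<longrightarrow> (\<forall>x\<in>F. c x = 0))"

(* Torsion-free rank r(X): maximal size of a Z-independent finite subset
  (= dim of Q \<otimes> X). *)
definition tf_rank :: "'a::ab_group_add set \<Rightarrow> nat" where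
  "tf_rank X = Sup {card F | F. finite F \<and> F \<subseteq> X \<and> z_indep F}"

definition finite_rank :: "'a::ab_group_add set \<Rightarrow> bool" where
  "finite_rank X \<longleftrightarrow> (\<exists>n. \<forall>F. finite F \<and> F \<subseteq> X \<and> z_indep F \<longrightarrow> card F \<le> n)"

definition isol :: "'a::ab_group_add set \<Rightarrow> 'a set" where
  "isol B = {a. \<exists>n\<ge>1. nmult n a \<in> B}"

definition dense :: "'a::ab_group_add set \<Rightarrow> bool" where
  "dense B \<longleftrightarrow> isol B = UNIV"

definition galg :: "'a set \<Rightarrow> ('a \<Rightarrow>\<^sub>0 'k::zero) set" where
  "galg B = {f. Poly_Mapping.keys f \<subseteq> B}"

definition is_ideal_in :: "'r::comm_ring_1 set \<Rightarrow> 'r set \<Rightarrow> bool" where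
  "is_ideal_in R I \<longleftrightarrow> I \<subseteq> R \<and> 0 \<in> I \<and> (\<forall>x\<in>I. \<forall>y\<in>I. x + y \<in> I)
     \<and> (\<forall>x\<in>I. \<forall>r\<in>R. r * x \<in> I)"

definition is_ideal :: "'r::comm_ring_1 set \<Rightarrow> bool" where
  "is_ideal I \<longleftrightarrow> is_ideal_in UNIV I"

definition prime_ideal :: "'r::comm_ring_1 set \<Rightarrow> bool" where
  "prime_ideal P \<longleftrightarrow> is_ideal P \<and> P \<noteq> UNIV \<and> (\<forall>x y. x * y \<in> P \<longrightarrow> x \<in> P \<or> y \<in> P)"

definition faithful :: "('a::ab_group_add \<Rightarrow>\<^sub>0 'k::comm_ring_1) set \<Rightarrow> bool" where
  "faithful I \<longleftrightarrow> (\<forall>a. Poly_Mapping.single a 1 - 1 \<in> I \<longrightarrow> a = 0)"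

definition ideal_gen_in :: "'r::comm_ring_1 set \<Rightarrow> 'r set \<Rightarrow> 'r set" where
  "ideal_gen_in R S = {f. \<exists>(n::nat) x y. (\<forall>i<n. x i \<in> S \<and> y i \<in> R) \<and> f = (\<Sum>i<n. x i * y i)}"

definition controls :: "'a::ab_group_add set \<Rightarrow> ('a \<Rightarrow>\<^sub>0 'k::comm_ring_1) set \<Rightarrow> 'a set \<Rightarrow> bool" where
  "controls B J H \<longleftrightarrow> J = ideal_gen_in (galg B) (J \<inter> galg H)"

definition controller :: "'a::ab_group_add set \<Rightarrow> ('a \<Rightarrow>\<^sub>0 'k::comm_ring_1) set \<Rightarrow> 'a set" where
  "controller B J = \<Inter>{H. subgrp H \<and> H \<subseteq> B \<and> controls B J H}"

definition aut_action :: "('g, 'b) monoid_scheme \<Rightarrow> ('g \<Rightarrow> 'a::ab_group_add \<Rightarrow> 'a) \<Rightarrow> bool" where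
  "aut_action G act \<longleftrightarrow> group G
     \<and> (\<forall>g\<in>carrier G. bij (act g) \<and> (\<forall>x y. act g (x + y) = act g x + act g y))
     \<and> act \<one>\<^bsub>G\<^esub> = id
     \<and> (\<forall>g\<in>carrier G. \<forall>h\<in>carrier G. act (g \<otimes>\<^bsub>G\<^esub> h) = act g \<circ> act h)"

(* Image I^\<gamma> of an ideal of kA under the extension of the automorphism \<sigma> = act \<gamma>
  to kA: (\<Sum> c_a a)^\<gamma> = \<Sum> c_a \<sigma>(a). *)
definition ideal_image :: "('a \<Rightarrow> 'a) \<Rightarrow> ('a \<Rightarrow>\<^sub>0 'k::zero) set \<Rightarrow> ('a \<Rightarrow>\<^sub>0 'k) set" where
  "ideal_image \<sigma> I = {g. \<exists>f\<in>I. \<forall>a. Poly_Mapping.lookup g (\<sigma> a) = Poly_Mapping.lookup f a}"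

definition standardiser ::
  "('g, 'b) monoid_scheme \<Rightarrow> ('g \<Rightarrow> 'a::ab_group_add \<Rightarrow> 'a) \<Rightarrow> ('a \<Rightarrow>\<^sub>0 'k::comm_ring_1) set \<Rightarrow> 'g set" where
  "standardiser G act I = {\<gamma> \<in> carrier G. \<exists>B. subgrp B \<and> fin_gen B \<and> dense B \<and>
      I \<inter> galg B = ideal_image (act \<gamma>) I \<inter> galg B}"

end

theory Submission
  imports Defs "HOL-Computational_Algebra.Polynomial"
begin


lemma nmult_0 [simp]: "nmult 0 a = 0" by (simp add: nmult_def)
lemma nmult_Suc: "nmult (Suc n) a = a + nmult n a" by (simp add: nmult_def)
lemma nmult_add: "nmult (m + n) a = nmult m a + nmult n a"
  by (induction m) (simp_all add: nmult_Suc add.assoc)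
lemma nmult_1 [simp]: "nmult 1 a = a" by (simp add: nmult_Suc)
lemma nmult_Suc0 [simp]: "nmult (Suc 0) a = a" by (simp add: nmult_Suc)
lemma nmult_plus: "nmult n (a + b) = nmult n a + nmult n b"
  by (induction n) (simp_all add: nmult_Suc algebra_simps)
lemma nmult_zero [simp]: "nmult n 0 = 0"
  by (induction n) (simp_all add: nmult_Suc)
lemma nmult_uminus: "nmult n (- a) = - nmult n a"
  by (induction n) (simp_all add: nmult_Suc algebra_simps)
lemma nmult_diff: "nmult n (a - b) = nmult n a - nmult n b"
  using nmult_plus[of n a "-b"] nmult_uminus[of n b] by simp
lemma nmult_mult: "nmult (m * n) a = nmult m (nmult n a)"
  by (induction m) (simp_all add: nmult_Suc nmult_add)
lemma nmult_sub: "n \<le> m \<Longrightarrow> nmult (m - n) a = nmult m a - nmult n a"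
  using nmult_add[of "m - n" n a] by simp

lemma zmult_of_nat [simp]: "zmult (int n) a = nmult n a"
  by (simp add: zmult_def)

lemma zmult_nat_diff: "zmult (int m - int n) a = nmult m a - nmult n a"
proof (cases "n \<le> m")
  case True
  then have e: "int m - int n = int (m - n)" by simp
  have "zmult (int m - int n) a = nmult (m - n) a" by (simp only: e zmult_of_nat)
  then show ?thesis using True by (simp add: nmult_sub)
next
  case False
  then have l: "\<not> 0 \<le> int m - int n" and e: "nat (- (int m - int n)) = n - m" by auto
  have "zmult (int m - int n) a = - nmult (n - m) a"
    unfolding zmult_def by (simp only: l e if_False)
  then show ?thesis using False by (simp add: nmult_sub)
qed

lemma zmult_decomp: "zmult z a = nmult (nat z) a - nmult (nat (- z)) a"
proof -
  have "z = int (nat z) - int (nat (- z))" by simp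
  then have "zmult z a = zmult (int (nat z) - int (nat (- z))) a" by simp
  then show ?thesis by (simp only: zmult_nat_diff)
qed

lemma zmult_0 [simp]: "zmult 0 a = 0" by (simp add: zmult_def)
lemma zmult_1 [simp]: "zmult 1 a = a" by (simp add: zmult_def nmult_Suc)
lemma zmult_zero [simp]: "zmult z 0 = 0" by (simp add: zmult_def)

lemma zmult_add: "zmult (x + y) a = zmult x a + zmult y a"
proof -
  obtain p1 p2 where x: "x = int p1 - int p2" by (rule int_diff_cases)
  obtain q1 q2 where y: "y = int q1 - int q2" by (rule int_diff_cases)
  have "x + y = int (p1 + q1) - int (p2 + q2)" using x y by simp
  then have "zmult (x + y) a = nmult (p1 + q1) a - nmult (p2 + q2) a"
    by (simp only: zmult_nat_diff)
  also have "\<dots> = (nmult p1 a - nmult p2 a) + (nmult q1 a - nmult q2 a)"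
    by (simp add: nmult_add)
  finally show ?thesis using x y by (simp only: zmult_nat_diff)
qed

lemma zmult_uminus_left: "zmult (- x) a = - zmult x a"
  using zmult_add[of x "-x" a] by (simp add: eq_neg_iff_add_eq_0 add.commute)

lemma zmult_diff_left: "zmult (x - y) a = zmult x a - zmult y a"
  using zmult_add[of x "-y" a] zmult_uminus_left[of y a] by simp

lemma zmult_plus: "zmult z (a + b) = zmult z a + zmult z b"
  by (simp add: zmult_decomp nmult_plus algebra_simps)
lemma zmult_uminus: "zmult z (- a) = - zmult z a"
  by (simp add: zmult_decomp nmult_uminus algebra_simps)
lemma zmult_diff: "zmult z (a - b) = zmult z a - zmult z b"
  by (simp add: zmult_decomp nmult_diff algebra_simps)

lemma zmult_nmult_inner: "zmult z (nmult n a) = zmult (z * int n) a"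
proof -
  have "zmult z (nmult n a) = nmult (nat z) (nmult n a) - nmult (nat (-z)) (nmult n a)"
    by (simp add: zmult_decomp)
  also have "\<dots> = nmult (nat z * n) a - nmult (nat (-z) * n) a"
    by (simp add: nmult_mult)
  also have "\<dots> = zmult (int (nat z * n) - int (nat (-z) * n)) a"
    by (simp only: zmult_nat_diff)
  also have "int (nat z * n) - int (nat (-z) * n) = z * int n"
    by (cases "z \<ge> 0") (simp_all add: algebra_simps)
  finally show ?thesis .
qed

lemma zmult_mult: "zmult (x * y) a = zmult x (zmult y a)"
proof -
  have "zmult x (zmult y a) = zmult x (nmult (nat y) a) - zmult x (nmult (nat (-y)) a)"
    by (simp add: zmult_decomp[of y] zmult_diff)
  also have "\<dots> = zmult (x * int (nat y) - x * int (nat (-y))) a"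
    by (simp add: zmult_nmult_inner zmult_diff_left)
  also have "x * int (nat y) - x * int (nat (-y)) = x * y"
    by (cases "y \<ge> 0") (simp_all add: algebra_simps)
  finally show ?thesis by simp
qed

lemma zmult_sum: "zmult z (sum f S) = sum (\<lambda>x. zmult z (f x)) S"
  by (induction S rule: infinite_finite_induct) (simp_all add: zmult_plus)

lemma sum_zmult_left: "zmult (sum g S) a = sum (\<lambda>x. zmult (g x) a) S"
  by (induction S rule: infinite_finite_induct) (simp_all add: zmult_add)

lemma hom_nmult:
  assumes "\<And>x y. s (x + y) = s x + s y"
  shows "s (nmult n a) = nmult n (s a)"
proof -
  have s0: "s 0 = 0" using assms[of 0 0] by simp
  show ?thesis by (induction n) (simp_all add: nmult_Suc assms s0)
qed

lemma subgrpD: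
  assumes "subgrp H"
  shows "0 \<in> H" "x \<in> H \<Longrightarrow> y \<in> H \<Longrightarrow> x - y \<in> H"
  using assms unfolding subgrp_def by auto

lemma subgrp_uminus: "subgrp H \<Longrightarrow> x \<in> H \<Longrightarrow> - x \<in> H"
  using subgrpD(2)[of H 0 x] by (simp add: subgrpD)

lemma subgrp_add: "subgrp H \<Longrightarrow> x \<in> H \<Longrightarrow> y \<in> H \<Longrightarrow> x + y \<in> H"
  using subgrpD(2)[of H x "-y"] subgrp_uminus[of H y] by simp

lemma subgrp_diff: "subgrp H \<Longrightarrow> x \<in> H \<Longrightarrow> y \<in> H \<Longrightarrow> x - y \<in> H"
  by (rule subgrpD(2))

lemma subgrp_nmult: "subgrp H \<Longrightarrow> x \<in> H \<Longrightarrow> nmult n x \<in> H"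
  by (induction n) (simp_all add: nmult_Suc subgrp_add subgrpD)

lemma subgrp_zmult: "subgrp H \<Longrightarrow> x \<in> H \<Longrightarrow> zmult z x \<in> H"
  by (simp add: zmult_decomp subgrp_diff subgrp_nmult)

lemma subgrp_sum: "subgrp H \<Longrightarrow> (\<And>x. x \<in> S \<Longrightarrow> f x \<in> H) \<Longrightarrow> sum f S \<in> H"
  by (induction S rule: infinite_finite_induct) (simp_all add: subgrp_add subgrpD)

lemma subgrp_UNIV [simp]: "subgrp UNIV" by (simp add: subgrp_def)

lemma subgrp_Int: "subgrp H \<Longrightarrow> subgrp K \<Longrightarrow> subgrp (H \<inter> K)"
  by (simp add: subgrp_def)

lemma subgrp_Inter: "(\<And>H. H \<in> \<H> \<Longrightarrow> subgrp H) \<Longrightarrow> subgrp (\<Inter>\<H>)"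
  by (simp add: subgrp_def)

lemma subgrp_add_cancel: "subgrp H \<Longrightarrow> x \<in> H \<Longrightarrow> (x + y \<in> H) = (y \<in> H)"
  by (metis add_diff_cancel_left' subgrp_add subgrp_diff)

lemma isol_mono: "X \<subseteq> Y \<Longrightarrow> isol X \<subseteq> isol Y"
  unfolding isol_def by blast

lemma subset_isol: "X \<subseteq> isol X"
proof
  fix x assume "x \<in> X"
  then have "nmult 1 x \<in> X" by simp
  then show "x \<in> isol X" unfolding isol_def by (intro CollectI exI[of _ 1]) simp
qed

lemma isol_subgrp:
  assumes "subgrp X" shows "subgrp (isol X)"
  unfolding subgrp_def
proof (intro conjI ballI)
  show "0 \<in> isol X" using assms subset_isol subgrpD(1) by blast
  fix x y assume "x \<in> isol X" "y \<in> isol X"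
  then obtain n m where n: "n \<ge> 1" "nmult n x \<in> X" and m: "m \<ge> 1" "nmult m y \<in> X"
    unfolding isol_def by auto
  have "nmult (m * n) (x - y) = nmult m (nmult n x) - nmult n (nmult m y)"
    by (simp add: nmult_diff nmult_mult[symmetric] mult.commute)
  also have "\<dots> \<in> X" using n m assms by (simp add: subgrp_nmult subgrp_diff)
  finally show "x - y \<in> isol X" unfolding isol_def using n m
    by (intro CollectI exI[of _ "m * n"]) (simp add: one_le_mult_iff)
qed

lemma isol_isol: "isol (isol X) = isol X"
proof
  show "isol (isol X) \<subseteq> isol X"
  proof
    fix x assume "x \<in> isol (isol X)"
    then obtain n m where "n \<ge> 1" "m \<ge> 1" "nmult m (nmult n x) \<in> X"
      unfolding isol_def by auto
    then show "x \<in> isol X" unfolding isol_def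
      by (intro CollectI exI[of _ "m * n"]) (simp add: nmult_mult one_le_mult_iff)
  qed
qed (rule subset_isol)

lemma isol_image:
  assumes "\<And>x y. s (x + y) = s x + s y"
  shows "s ` isol X \<subseteq> isol (s ` X)"
proof
  fix y assume "y \<in> s ` isol X"
  then obtain x n where "y = s x" "n \<ge> 1" "nmult n x \<in> X" unfolding isol_def by auto
  then have "nmult n y \<in> s ` X" using hom_nmult[OF assms, of n x] by (metis image_eqI)
  then show "y \<in> isol (s ` X)" unfolding isol_def using \<open>n \<ge> 1\<close> by auto
qed



abbreviation lookup where "lookup \<equiv> Poly_Mapping.lookup"
abbreviation keys where "keys \<equiv> Poly_Mapping.keys"
abbreviation single where "single \<equiv> Poly_Mapping.single"

lemma pm_expand: "f = (\<Sum>a\<in>keys f. single a (lookup f a))"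
proof (rule poly_mapping_eqI)
  fix k
  show "lookup f k = lookup (\<Sum>a\<in>keys f. single a (lookup f a)) k"
    by (simp add: lookup_sum lookup_single when_def in_keys_iff)
qed

lemma single_mult_expand:
  "single a c * f = (\<Sum>b\<in>keys f. single (a + b) (c * lookup f b))"
proof -
  have "single a c * f = single a c * (\<Sum>b\<in>keys f. single b (lookup f b))"
    by (subst pm_expand[of f]) simp
  also have "\<dots> = (\<Sum>b\<in>keys f. single (a + b) (c * lookup f b))"
    by (simp add: sum_distrib_left mult_single)
  finally show ?thesis .
qed

lemma lookup_single_mult:
  fixes f :: "'a::ab_group_add \<Rightarrow>\<^sub>0 'k::comm_ring_1"
  shows "lookup (single a c * f) x = c * lookup f (x - a)"
proof -
  have e: "\<And>b. (a + b = x) = (b = x - a)" by (auto simp: algebra_simps)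
  have "lookup (single a c * f) x = (\<Sum>b\<in>keys f. (c * lookup f b when a + b = x))"
    by (simp add: single_mult_expand lookup_sum lookup_single)
  also have "\<dots> = (\<Sum>b\<in>keys f. (if b = x - a then c * lookup f b else 0))"
    by (simp add: when_def e)
  also have "\<dots> = c * lookup f (x - a)"
    by (simp add: in_keys_iff)
  finally show ?thesis .
qed

lemma single_mult_single_neg:
  fixes f :: "'a::ab_group_add \<Rightarrow>\<^sub>0 'k::comm_ring_1"
  shows "single a 1 * (single (- a) 1 * f) = f"
  by (simp add: mult.assoc[symmetric] mult_single)

definition proj :: "'a set \<Rightarrow> ('a \<Rightarrow>\<^sub>0 'k::zero) \<Rightarrow> ('a \<Rightarrow>\<^sub>0 'k)" where
  "proj H f = Abs_poly_mapping (\<lambda>a. if a \<in> H then lookup f a else 0)"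

lemma lookup_proj: "lookup (proj H f) a = (if a \<in> H then lookup f a else 0)"
proof -
  have "finite {a. (if a \<in> H then lookup f a else 0) \<noteq> 0}"
    by (rule finite_subset[OF _ finite_lookup[of f]]) auto
  then show ?thesis unfolding proj_def by simp
qed

lemma keys_proj: "keys (proj H f) = keys f \<inter> H"
  by (auto simp: in_keys_iff lookup_proj split: if_splits)

lemma proj_add: "proj H (f + g) = proj H f + proj H (g :: 'a \<Rightarrow>\<^sub>0 'k::monoid_add)"
  by (rule poly_mapping_eqI) (simp add: lookup_proj lookup_add)

lemma proj_0 [simp]: "proj H 0 = 0"
  by (rule poly_mapping_eqI) (simp add: lookup_proj)

lemma proj_uminus: "proj H (- f) = - proj H (f :: 'a \<Rightarrow>\<^sub>0 'k::ab_group_add)"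
  by (rule poly_mapping_eqI) (simp add: lookup_proj)

lemma proj_diff: "proj H (f - g) = proj H f - proj H (g :: 'a \<Rightarrow>\<^sub>0 'k::ab_group_add)"
  by (rule poly_mapping_eqI) (simp add: lookup_proj lookup_minus)

lemma proj_sum: "proj H (sum g S) = (\<Sum>x\<in>S. proj H (g x :: 'a \<Rightarrow>\<^sub>0 'k::comm_monoid_add))"
  by (induction S rule: infinite_finite_induct) (simp_all add: proj_add)

lemma proj_id: "keys f \<subseteq> H \<Longrightarrow> proj H f = f"
  by (rule poly_mapping_eqI) (auto simp: lookup_proj in_keys_iff)

lemma proj_Int: "proj (H \<inter> K) f = proj H (proj K f)"
  by (rule poly_mapping_eqI) (simp add: lookup_proj)

lemma proj_cong:
  assumes "keys f \<inter> H = keys f \<inter> K" shows "proj H f = proj K f"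
proof (rule poly_mapping_eqI)
  fix k
  show "lookup (proj H f) k = lookup (proj K f) k"
  proof (cases "k \<in> keys f")
    case True
    then have "(k \<in> H) = (k \<in> K)" using assms by blast
    then show ?thesis by (simp add: lookup_proj)
  next
    case False
    then show ?thesis by (simp add: lookup_proj in_keys_iff)
  qed
qed

lemma proj_single_mult:
  fixes f :: "'a::ab_group_add \<Rightarrow>\<^sub>0 'k::comm_ring_1"
  assumes "subgrp H" "a \<in> H"
  shows "proj H (single a c * f) = single a c * proj H f"
proof (rule poly_mapping_eqI)
  fix x
  have "(x \<in> H) = (x - a \<in> H)"
    using assms by (metis diff_add_cancel subgrp_add subgrp_diff)
  then show "lookup (proj H (single a c * f)) x = lookup (single a c * proj H f) x"
    by (simp add: lookup_proj lookup_single_mult)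
qed

lemma proj_mult_left:
  fixes f h :: "'a::ab_group_add \<Rightarrow>\<^sub>0 'k::comm_ring_1"
  assumes "subgrp H" "keys h \<subseteq> H"
  shows "proj H (h * f) = h * proj H f"
proof -
  have "proj H (h * f) = proj H ((\<Sum>a\<in>keys h. single a (lookup h a)) * f)"
    by (subst pm_expand[of h]) simp
  also have "\<dots> = (\<Sum>a\<in>keys h. single a (lookup h a) * proj H f)"
    using assms by (simp add: sum_distrib_right proj_sum proj_single_mult subset_iff)
  also have "\<dots> = h * proj H f"
    by (subst (2) pm_expand[of h]) (simp add: sum_distrib_right)
  finally show ?thesis .
qed

lemma proj_single_mult_out:
  fixes h :: "'a::ab_group_add \<Rightarrow>\<^sub>0 'k::comm_ring_1"
  assumes "subgrp H" "keys h \<subseteq> H" "a \<notin> H"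
  shows "proj H (single a c * h) = 0"
proof (rule poly_mapping_eqI)
  fix x
  show "lookup (proj H (single a c * h)) x = lookup 0 x"
  proof (cases "x \<in> H")
    case True
    have "x - a \<notin> H"
    proof
      assume "x - a \<in> H"
      then have "x - (x - a) \<in> H" by (rule subgrp_diff[OF assms(1) True])
      then show False using assms(3) by simp
    qed
    then have "lookup h (x - a) = 0" using assms(2) by (auto simp: in_keys_iff)
    then show ?thesis by (simp add: lookup_proj lookup_single_mult)
  qed (simp add: lookup_proj)
qed

lemma galg_iff: "f \<in> galg B \<longleftrightarrow> keys f \<subseteq> B" by (simp add: galg_def)

lemma galg_UNIV [simp]: "galg UNIV = UNIV" by (simp add: galg_def)

lemma galg_add: "f \<in> galg B \<Longrightarrow> g \<in> galg B \<Longrightarrow> f + g \<in> galg B"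
  unfolding galg_def mem_Collect_eq using keys_add[of f g] by blast

lemma galg_0 [simp]: "0 \<in> galg B" by (simp add: galg_def)

lemma galg_uminus: "f \<in> galg B \<Longrightarrow> - (f :: 'a \<Rightarrow>\<^sub>0 'k::ab_group_add) \<in> galg B"
  unfolding galg_def by (simp add: keys_minus)

lemma galg_diff: "f \<in> galg B \<Longrightarrow> g \<in> galg B \<Longrightarrow> f - (g :: 'a \<Rightarrow>\<^sub>0 'k::ab_group_add) \<in> galg B"
  using galg_add[of f B "-g"] galg_uminus[of g B] by simp

lemma galg_sum: "(\<And>x. x \<in> S \<Longrightarrow> g x \<in> galg B) \<Longrightarrow> sum g S \<in> galg B"
  by (induction S rule: infinite_finite_induct) (simp_all add: galg_add)

lemma galg_single: "a \<in> B \<Longrightarrow> single a c \<in> galg B"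
  by (simp add: galg_def)

lemma galg_mult:
  fixes f g :: "'a::ab_group_add \<Rightarrow>\<^sub>0 'k::comm_ring_1"
  assumes "subgrp B" "f \<in> galg B" "g \<in> galg B"
  shows "f * g \<in> galg B"
proof -
  have "keys (f * g) \<subseteq> B"
  proof
    fix x assume "x \<in> keys (f * g)"
    then obtain a b where "x = a + b" "a \<in> keys f" "b \<in> keys g" using keys_mult[of f g] by blast
    then show "x \<in> B" using assms unfolding galg_def by (auto intro: subgrp_add)
  qed
  then show ?thesis by (simp add: galg_def)
qed

lemma galg_one: "subgrp B \<Longrightarrow> (1 :: 'a::ab_group_add \<Rightarrow>\<^sub>0 'k::comm_ring_1) \<in> galg B"
  by (simp add: galg_def subgrpD(1))

lemma galg_proj: "keys f \<inter> H \<subseteq> B \<Longrightarrow> proj H f \<in> galg B"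
  by (simp add: galg_def keys_proj)

lemma galg_mono: "B \<subseteq> C \<Longrightarrow> galg B \<subseteq> galg C"
  by (auto simp: galg_def)

section \<open>Decomposition along cosets\<close>

lemma pm_decomp:
  fixes f :: "'a::ab_group_add \<Rightarrow>\<^sub>0 'k::comm_ring_1"
  assumes H: "subgrp H"
  shows "\<exists>T. finite T \<and> T \<subseteq> keys f \<and> (\<forall>t\<in>T. \<forall>t'\<in>T. t - t' \<in> H \<longrightarrow> t = t') \<and>
     (\<forall>a\<in>keys f. \<exists>t\<in>T. a - t \<in> H) \<and>
     f = (\<Sum>t\<in>T. single t 1 * proj H (single (- t) 1 * f))"
proof -
  define r where "r a = (SOME b. b \<in> keys f \<and> b - a \<in> H)" for a
  have rp: "r a \<in> keys f \<and> r a - a \<in> H" if "a \<in> keys f" for a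
    unfolding r_def by (rule someI[of _ a]) (use that H in \<open>simp add: subgrpD\<close>)
  have req: "r a = r a'" if "a - a' \<in> H" for a a'
  proof -
    have "(\<lambda>b. b \<in> keys f \<and> b - a \<in> H) = (\<lambda>b. b \<in> keys f \<and> b - a' \<in> H)"
    proof (intro ext)
      fix b
      have "b - a' = (b - a) + (a - a')" "b - a = (b - a') - (a - a')" by simp_all
      then show "(b \<in> keys f \<and> b - a \<in> H) = (b \<in> keys f \<and> b - a' \<in> H)"
        using that H by (metis subgrp_add subgrp_diff)
    qed
    then show ?thesis unfolding r_def by simp
  qed
  define T where "T = r ` keys f"
  have fin: "finite T" unfolding T_def by simp
  have sub: "T \<subseteq> keys f" unfolding T_def using rp by auto
  have key: "(x - t \<in> H) = (t = r x)" if "t \<in> T" "x \<in> keys f" for t x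
  proof
    assume xt: "x - t \<in> H"
    from that obtain a where a: "a \<in> keys f" "t = r a" unfolding T_def by auto
    have "r a - a \<in> H" using rp a by simp
    moreover have "x - a = (x - r a) + (r a - a)" by simp
    ultimately have "x - a \<in> H" using xt a H subgrp_add by metis
    then show "t = r x" using req[of x a] a by simp
  next
    assume "t = r x"
    then have "t - x \<in> H" using rp that by simp
    then have "- (t - x) \<in> H" by (rule subgrp_uminus[OF H])
    then show "x - t \<in> H" by simp
  qed
  have dist: "\<forall>t\<in>T. \<forall>t'\<in>T. t - t' \<in> H \<longrightarrow> t = t'"
  proof (intro ballI impI)
    fix t t' assume tt: "t \<in> T" "t' \<in> T" "t - t' \<in> H"
    then have "t' \<in> keys f" using sub by auto
    have "- (t - t') \<in> H" using tt(3) by (rule subgrp_uminus[OF H])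
    then have "t' - t \<in> H" by simp
    then have "t = r t'" using key[OF tt(1) \<open>t' \<in> keys f\<close>] by simp
    moreover have "t' = r t'" using key[OF tt(2) \<open>t' \<in> keys f\<close>] subgrpD(1)[OF H] by simp
    ultimately show "t = t'" by simp
  qed
  have cov: "\<forall>a\<in>keys f. \<exists>t\<in>T. a - t \<in> H"
    using key unfolding T_def by blast
  have "f = (\<Sum>t\<in>T. single t 1 * proj H (single (- t) 1 * f))"
  proof (rule poly_mapping_eqI)
    fix x
    have i: "lookup (single t 1 * proj H (single (- t) 1 * f)) x = (if x - t \<in> H then lookup f x else 0)" for t
      using lookup_single_mult[of t 1 "proj H (single (- t) 1 * f)" x]
        lookup_single_mult[of "- t" 1 f "x - t"] by (simp add: lookup_proj)
    have "lookup (\<Sum>t\<in>T. single t 1 * proj H (single (- t) 1 * f)) x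
       = (\<Sum>t\<in>T. if x - t \<in> H then lookup f x else 0)"
      by (simp only: lookup_sum i)
    also have "\<dots> = lookup f x"
    proof (cases "x \<in> keys f")
      case True
      then have "(\<Sum>t\<in>T. if x - t \<in> H then lookup f x else 0)
          = (\<Sum>t\<in>T. if t = r x then lookup f x else 0)"
        using key by (intro sum.cong) auto
      also have "\<dots> = lookup f x" using True fin unfolding T_def by simp
      finally show ?thesis .
    next
      case False
      then have z: "lookup f x = 0" by (simp add: in_keys_iff)
      show ?thesis by (simp only: z if_cancel sum.neutral_const)
    qed
    finally show "lookup f x = lookup (\<Sum>t\<in>T. single t 1 * proj H (single (- t) 1 * f)) x" by simp
  qed
  then show ?thesis using fin sub dist cov by blast
qed



lemma ideal_in_sum:
  assumes "is_ideal_in R I" "\<And>x. x \<in> S \<Longrightarrow> g x \<in> I"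
  shows "sum g S \<in> I"
  using assms(2)
proof (induction S rule: infinite_finite_induct)
  case (infinite A) then show ?case using assms(1) by (simp add: is_ideal_in_def)
next
  case empty then show ?case using assms(1) by (simp add: is_ideal_in_def)
next
  case (insert x F) then show ?case using assms(1) by (simp add: is_ideal_in_def)
qed

lemma ideal_in_mult_left:
  "is_ideal_in R I \<Longrightarrow> x \<in> I \<Longrightarrow> r \<in> R \<Longrightarrow> r * x \<in> I"
  unfolding is_ideal_in_def by blast

lemma ideal_in_mult_right:
  "is_ideal_in R I \<Longrightarrow> x \<in> I \<Longrightarrow> r \<in> R \<Longrightarrow> x * r \<in> I"
  using ideal_in_mult_left[of R I x r] by (simp add: mult.commute)

lemma ideal_in_add:
  "is_ideal_in R I \<Longrightarrow> x \<in> I \<Longrightarrow> y \<in> I \<Longrightarrow> x + y \<in> I"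
  by (simp add: is_ideal_in_def)

lemma ideal_in_0:
  "is_ideal_in R I \<Longrightarrow> 0 \<in> I"
  by (simp add: is_ideal_in_def)

lemma ideal_in_sub:
  "is_ideal_in R I \<Longrightarrow> I \<subseteq> R"
  by (simp add: is_ideal_in_def)

lemma is_idealD:
  assumes "is_ideal I"
  shows "0 \<in> I" "x \<in> I \<Longrightarrow> y \<in> I \<Longrightarrow> x + y \<in> I" "x \<in> I \<Longrightarrow> r * x \<in> I"
    "x \<in> I \<Longrightarrow> x * r \<in> I"
  using assms unfolding is_ideal_def is_ideal_in_def by (auto simp: mult.commute)

lemma is_ideal_uminus: "is_ideal I \<Longrightarrow> x \<in> I \<Longrightarrow> - x \<in> I"
  using is_idealD(3)[of I x "-1"] by simp

lemma is_ideal_diff: "is_ideal I \<Longrightarrow> x \<in> I \<Longrightarrow> y \<in> I \<Longrightarrow> x - y \<in> I"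
  using is_idealD(2)[of I x "-y"] is_ideal_uminus[of I y] by simp

lemma is_ideal_sum: "is_ideal I \<Longrightarrow> (\<And>x. x \<in> S \<Longrightarrow> g x \<in> I) \<Longrightarrow> sum g S \<in> I"
  unfolding is_ideal_def by (rule ideal_in_sum)

lemma is_ideal_one: "is_ideal I \<Longrightarrow> I \<noteq> UNIV \<Longrightarrow> 1 \<notin> I"
  using is_idealD(3)[of I 1] by auto

lemma prime_idealD:
  assumes "prime_ideal P"
  shows "is_ideal P" "P \<noteq> UNIV" "x * y \<in> P \<Longrightarrow> x \<notin> P \<Longrightarrow> y \<in> P" "1 \<notin> P"
  using assms is_ideal_one[of P] by (auto simp: prime_ideal_def)

lemma prime_ideal_power:
  assumes "prime_ideal P" "x \<notin> P" shows "x ^ n \<notin> P"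
proof (induction n)
  case 0 then show ?case using prime_idealD(4)[OF assms(1)] by simp
next
  case (Suc n) then show ?case using assms prime_idealD(3)[OF assms(1), of x "x ^ n"] by auto
qed

lemma galg_ideal:
  fixes P :: "('a::ab_group_add \<Rightarrow>\<^sub>0 'k::comm_ring_1) set"
  assumes "is_ideal P" "subgrp B"
  shows "is_ideal_in (galg B) (galg B \<inter> P)"
  unfolding is_ideal_in_def using assms
  by (auto simp: galg_add galg_mult is_idealD)

lemma gen_sum:
  assumes "finite T" "\<And>t. t \<in> T \<Longrightarrow> x t \<in> S" "\<And>t. t \<in> T \<Longrightarrow> y t \<in> R"
  shows "(\<Sum>t\<in>T. x t * y t) \<in> ideal_gen_in R S"
proof -
  obtain h where h: "bij_betw h {0..<card T} T" using ex_bij_betw_nat_finite[OF assms(1)] by blast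
  have "(\<Sum>t\<in>T. x t * y t) = (\<Sum>i<card T. x (h i) * y (h i))"
    using sum.reindex_bij_betw[OF h, of "\<lambda>t. x t * y t"] by (simp add: atLeast0LessThan)
  moreover have "\<forall>i<card T. x (h i) \<in> S \<and> y (h i) \<in> R"
    using h assms(2,3) bij_betwE by fastforce
  ultimately show ?thesis unfolding ideal_gen_in_def
    by (intro CollectI exI[of _ "card T"] exI[of _ "\<lambda>i. x (h i)"] exI[of _ "\<lambda>i. y (h i)"]) auto
qed

lemma gen_subset:
  assumes "is_ideal_in R I" "S \<subseteq> I"
  shows "ideal_gen_in R S \<subseteq> I"
proof
  fix f assume "f \<in> ideal_gen_in R S"
  then obtain n :: nat and x y where xy: "\<forall>i<n. x i \<in> S \<and> y i \<in> R" "f = (\<Sum>i<n. x i * y i)"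
    unfolding ideal_gen_in_def mem_Collect_eq by blast
  have "x i * y i \<in> I" if "i < n" for i
    using xy(1) that assms by (auto intro: ideal_in_mult_right)
  then show "f \<in> I" unfolding xy(2) using assms(1) by (intro ideal_in_sum) auto
qed

lemma gen_base:
  assumes "1 \<in> R" "s \<in> S"
  shows "s \<in> ideal_gen_in R S"
  unfolding ideal_gen_in_def using assms
  by (intro CollectI exI[of _ 1] exI[of _ "\<lambda>i. s"] exI[of _ "\<lambda>i. 1"]) auto

lemma gen_mono:
  "R \<subseteq> R' \<Longrightarrow> S \<subseteq> S' \<Longrightarrow> ideal_gen_in R S \<subseteq> ideal_gen_in R' S'"
  unfolding ideal_gen_in_def mem_Collect_eq by blast

lemma gen_add_term:
  assumes "f \<in> ideal_gen_in R S" "a \<in> S" "b \<in> R"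
  shows "f + a * b \<in> ideal_gen_in R S"
proof -
  obtain n :: nat and x y where xy: "\<forall>i<n. x i \<in> S \<and> y i \<in> R" "f = (\<Sum>i<n. x i * y i)"
    using assms(1) unfolding ideal_gen_in_def mem_Collect_eq by blast
  have "f + a * b = (\<Sum>i<Suc n. (x(n := a)) i * (y(n := b)) i)"
    unfolding xy(2) by (simp add: lessThan_Suc)
  moreover have "\<forall>i<Suc n. (x(n := a)) i \<in> S \<and> (y(n := b)) i \<in> R"
    using xy(1) assms by (auto simp: less_Suc_eq)
  ultimately show ?thesis unfolding ideal_gen_in_def
    by (intro CollectI exI[of _ "Suc n"] exI[of _ "x(n := a)"] exI[of _ "y(n := b)"]) auto
qed

lemma gen_add:
  assumes "f \<in> ideal_gen_in R S" "g \<in> ideal_gen_in R S"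
  shows "f + g \<in> ideal_gen_in R S"
proof -
  obtain m :: nat and x y where xy: "\<forall>i<m. x i \<in> S \<and> y i \<in> R" "g = (\<Sum>i<m. x i * y i)"
    using assms(2) unfolding ideal_gen_in_def mem_Collect_eq by blast
  have "\<forall>k\<le>m. f + (\<Sum>i<k. x i * y i) \<in> ideal_gen_in R S"
  proof (intro allI impI)
    fix k assume "k \<le> m"
    then show "f + (\<Sum>i<k. x i * y i) \<in> ideal_gen_in R S"
    proof (induction k)
      case 0 then show ?case using assms(1) by simp
    next
      case (Suc k)
      then have "f + (\<Sum>i<k. x i * y i) + x k * y k \<in> ideal_gen_in R S"
        using xy(1) by (intro gen_add_term) auto
      then show ?case by (simp add: add.assoc)
    qed
  qed
  then show ?thesis using xy(2) by simp
qed

lemma gen_zero: "0 \<in> ideal_gen_in R S"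
  unfolding ideal_gen_in_def by (intro CollectI exI[of _ 0]) auto

lemma gen_mult:
  assumes "f \<in> ideal_gen_in UNIV S"
  shows "r * f \<in> ideal_gen_in UNIV S"
proof -
  obtain n :: nat and x y where xy: "\<forall>i<n. x i \<in> S" "f = (\<Sum>i<n. x i * y i)"
    using assms unfolding ideal_gen_in_def mem_Collect_eq by blast
  have "r * f = (\<Sum>i<n. x i * (r * y i))"
    unfolding xy(2) by (simp add: sum_distrib_left mult.left_commute)
  then show ?thesis unfolding ideal_gen_in_def using xy(1)
    by (intro CollectI exI[of _ n] exI[of _ x] exI[of _ "\<lambda>i. r * y i"]) auto
qed

lemma gen_is_ideal: "is_ideal (ideal_gen_in UNIV S)"
  unfolding is_ideal_def is_ideal_in_def using gen_zero gen_add gen_mult by blast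

section \<open>Control\<close>

lemma controls_proj:
  fixes J :: "('a::ab_group_add \<Rightarrow>\<^sub>0 'k::comm_ring_1) set"
  assumes B: "subgrp B" and J: "is_ideal_in (galg B) J" and H: "subgrp H" "H \<subseteq> B"
  shows "controls B J H \<longleftrightarrow> (\<forall>f\<in>J. proj H f \<in> J)"
proof
  assume c: "controls B J H"
  show "\<forall>f\<in>J. proj H f \<in> J"
  proof
    fix f assume "f \<in> J"
    then have "f \<in> ideal_gen_in (galg B) (J \<inter> galg H)" using c unfolding controls_def by simp
    then obtain n :: nat and x y where xy: "\<forall>i<n. x i \<in> J \<inter> galg H \<and> y i \<in> galg B" "f = (\<Sum>i<n. x i * y i)"
      unfolding ideal_gen_in_def mem_Collect_eq by blast
    have "proj H f = (\<Sum>i<n. x i * proj H (y i))"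
      unfolding xy(2) proj_sum using xy(1) H(1)
      by (intro sum.cong refl proj_mult_left) (auto simp: galg_iff)
    also have "\<dots> \<in> J"
    proof (rule ideal_in_sum[OF J])
      fix i assume "i \<in> {..<n}"
      then show "x i * proj H (y i) \<in> J"
        using xy(1) H(2) by (intro ideal_in_mult_right[OF J]) (auto intro: galg_proj)
    qed
    finally show "proj H f \<in> J" .
  qed
next
  assume p: "\<forall>f\<in>J. proj H f \<in> J"
  have JB: "J \<subseteq> galg B" using J by (rule ideal_in_sub)
  show "controls B J H" unfolding controls_def
  proof
    show "J \<subseteq> ideal_gen_in (galg B) (J \<inter> galg H)"
    proof
      fix f assume f: "f \<in> J"
      obtain T where T: "finite T" "T \<subseteq> keys f"
        "f = (\<Sum>t\<in>T. single t 1 * proj H (single (- t) 1 * f))"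
        using pm_decomp[OF H(1), of f] by blast
      have "f = (\<Sum>t\<in>T. proj H (single (- t) 1 * f) * single t 1)"
        using T(3) by (simp add: mult.commute)
      also have "\<dots> \<in> ideal_gen_in (galg B) (J \<inter> galg H)"
      proof (rule gen_sum[OF T(1)])
        fix t assume t: "t \<in> T"
        have "f \<in> galg B" using JB f by blast
        then have "keys f \<subseteq> B" by (simp add: galg_iff)
        then have tB: "t \<in> B" using T(2) t by blast
        then have "single (- t) 1 * f \<in> J"
          using f B by (intro ideal_in_mult_left[OF J]) (auto intro: galg_single subgrp_uminus)
        then show "proj H (single (- t) 1 * f) \<in> J \<inter> galg H"
          using p by (auto simp: galg_iff keys_proj)
        show "single t 1 \<in> galg B" using tB by (rule galg_single)
      qed
      finally show "f \<in> ideal_gen_in (galg B) (J \<inter> galg H)" .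
    qed
    show "ideal_gen_in (galg B) (J \<inter> galg H) \<subseteq> J"
      using J by (rule gen_subset) auto
  qed
qed

lemma controls_self:
  fixes J :: "('a::ab_group_add \<Rightarrow>\<^sub>0 'k::comm_ring_1) set"
  assumes B: "subgrp B" and J: "is_ideal_in (galg B) J"
  shows "controls B J B"
proof -
  have JB: "J \<subseteq> galg B" using J by (rule ideal_in_sub)
  have "J \<subseteq> ideal_gen_in (galg B) (J \<inter> galg B)"
  proof
    fix f assume "f \<in> J"
    then have "f \<in> J \<inter> galg B" using JB by blast
    then show "f \<in> ideal_gen_in (galg B) (J \<inter> galg B)" by (rule gen_base[OF galg_one[OF B]])
  qed
  moreover have "ideal_gen_in (galg B) (J \<inter> galg B) \<subseteq> J" using J by (rule gen_subset) auto
  ultimately show ?thesis unfolding controls_def by blast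
qed

lemma controls_mono:
  fixes J :: "('a::ab_group_add \<Rightarrow>\<^sub>0 'k::comm_ring_1) set"
  assumes J: "is_ideal_in (galg B) J" and c: "controls B J D" and DH: "D \<subseteq> H"
  shows "controls B J H"
proof -
  have "J \<inter> galg D \<subseteq> J \<inter> galg H" using galg_mono[OF DH] by blast
  then have "ideal_gen_in (galg B) (J \<inter> galg D) \<subseteq> ideal_gen_in (galg B) (J \<inter> galg H)"
    by (rule gen_mono[OF order_refl])
  then have "J \<subseteq> ideal_gen_in (galg B) (J \<inter> galg H)"
    using c unfolding controls_def by simp
  moreover have "ideal_gen_in (galg B) (J \<inter> galg H) \<subseteq> J" using J by (rule gen_subset) auto
  ultimately show ?thesis unfolding controls_def by blast
qed

lemma controller_subgrp: "subgrp (controller B J)"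
  unfolding controller_def by (rule subgrp_Inter) auto

lemma controller_sub:
  fixes J :: "('a::ab_group_add \<Rightarrow>\<^sub>0 'k::comm_ring_1) set"
  assumes "subgrp B" "is_ideal_in (galg B) J"
  shows "controller B J \<subseteq> B"
  unfolding controller_def using controls_self[OF assms] assms(1) by blast

lemma controller_least:
  "subgrp H \<Longrightarrow> H \<subseteq> B \<Longrightarrow> controls B J H \<Longrightarrow> controller B J \<subseteq> H"
  unfolding controller_def by blast

lemma controller_controls:
  fixes J :: "('a::ab_group_add \<Rightarrow>\<^sub>0 'k::comm_ring_1) set"
  assumes B: "subgrp B" and J: "is_ideal_in (galg B) J"
  shows "controls B J (controller B J)"
proof -
  define F where "F = {H. subgrp H \<and> H \<subseteq> B \<and> controls B J H}"
  have C: "controller B J = \<Inter>F" unfolding controller_def F_def by simp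
  have JB: "J \<subseteq> galg B" using J by (rule ideal_in_sub)
  have A: "\<forall>f\<in>J. proj (B \<inter> \<Inter>S) f \<in> J" if "finite S" "S \<subseteq> F" for S
    using that
  proof (induction S rule: finite_induct)
    case empty
    show ?case
    proof
      fix f assume "f \<in> J"
      then have "f \<in> galg B" using JB by blast
      then have "keys f \<subseteq> B" by (simp add: galg_iff)
      then show "proj (B \<inter> \<Inter>{}) f \<in> J" using \<open>f \<in> J\<close> by (simp add: proj_id)
    qed
  next
    case (insert H S)
    then have H: "subgrp H" "H \<subseteq> B" "controls B J H" unfolding F_def by auto
    show ?case
    proof
      fix f assume "f \<in> J"
      then have "proj (B \<inter> \<Inter>S) f \<in> J" using insert by auto
      then have "proj H (proj (B \<inter> \<Inter>S) f) \<in> J"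
        using controls_proj[OF B J H(1,2)] H(3) by blast
      moreover have "B \<inter> \<Inter>(insert H S) = H \<inter> (B \<inter> \<Inter>S)" by auto
      ultimately show "proj (B \<inter> \<Inter>(insert H S)) f \<in> J" by (simp add: proj_Int)
    qed
  qed
  have "\<forall>f\<in>J. proj (\<Inter>F) f \<in> J"
  proof
    fix f assume f: "f \<in> J"
    define h where "h a = (SOME H. H \<in> F \<and> a \<notin> H)" for a
    have hp: "h a \<in> F \<and> a \<notin> h a" if "a \<notin> \<Inter>F" for a
      unfolding h_def by (rule someI_ex) (use that in blast)
    define S where "S = h ` (keys f - \<Inter>F)"
    have S: "finite S" "S \<subseteq> F" unfolding S_def using hp by auto
    have "B \<in> F" unfolding F_def using controls_self[OF B J] B by simp
    have "keys f \<inter> \<Inter>F = keys f \<inter> (B \<inter> \<Inter>S)"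
    proof
      show "keys f \<inter> \<Inter>F \<subseteq> keys f \<inter> (B \<inter> \<Inter>S)" using S(2) \<open>B \<in> F\<close> by blast
      show "keys f \<inter> (B \<inter> \<Inter>S) \<subseteq> keys f \<inter> \<Inter>F"
      proof
        fix a assume a: "a \<in> keys f \<inter> (B \<inter> \<Inter>S)"
        show "a \<in> keys f \<inter> \<Inter>F"
        proof (rule ccontr)
          assume "a \<notin> keys f \<inter> \<Inter>F"
          then have "a \<notin> \<Inter>F" "a \<in> keys f" using a by auto
          then have "h a \<in> S" "a \<notin> h a" using hp unfolding S_def by auto
          then show False using a by blast
        qed
      qed
    qed
    then have "proj (\<Inter>F) f = proj (B \<inter> \<Inter>S) f" by (rule proj_cong)
    then show "proj (\<Inter>F) f \<in> J" using A[OF S] f by simp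
  qed
  moreover have "subgrp (\<Inter>F)" "\<Inter>F \<subseteq> B"
    using controller_subgrp[of B J] controller_sub[OF B J] C by simp_all
  ultimately show ?thesis unfolding C using controls_proj[OF B J] by blast
qed



section \<open>Linear dependence modulo a prime ideal\<close>

lemma lin_dep:
  fixes g :: "'x \<Rightarrow> 'r::comm_ring_1" and J :: "'r set"
  assumes J: "prime_ideal J"
    and Smult: "\<And>a b. a \<in> S \<Longrightarrow> b \<in> S \<Longrightarrow> a * b \<in> S"
    and Sdiff: "\<And>a b. a \<in> S \<Longrightarrow> b \<in> S \<Longrightarrow> a - b \<in> S"
    and S1: "1 \<in> S" and S0: "0 \<in> S"
    and T: "finite T"
  shows "\<And>(I :: 'i set) v c. finite I \<Longrightarrow> card T < card I \<Longrightarrow> (\<forall>j\<in>I. \<forall>t\<in>T. c j t \<in> S) \<Longrightarrow>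
     (\<forall>j\<in>I. v j - (\<Sum>t\<in>T. c j t * g t) \<in> J) \<Longrightarrow>
     \<exists>s. (\<forall>j\<in>I. s j \<in> S) \<and> (\<exists>j\<in>I. s j \<notin> J) \<and> (\<Sum>j\<in>I. s j * v j) \<in> J"
  using T
proof (induction T rule: finite_induct)
  have Jid: "is_ideal J" using prime_idealD(1)[OF J] .
  have Sadd: "a + b \<in> S" if "a \<in> S" "b \<in> S" for a b
    using Sdiff[OF that(1) Sdiff[OF S0 that(2)]] by simp
  have Ssum: "sum f X \<in> S" if "\<And>x. x \<in> X \<Longrightarrow> f x \<in> S" for f and X :: "'i set"
    using that by (induction X rule: infinite_finite_induct) (auto simp: S0 Sadd)
  {
    case empty
    fix I :: "'i set" and v c
    assume I: "finite I" "card {} < card I" and v: "\<forall>j\<in>I. v j - (\<Sum>t\<in>{}. c j t * g t) \<in> J"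
    then obtain j0 where j0: "j0 \<in> I" by fastforce
    define s where "s j = (if j = j0 then 1 else (0 :: 'r))" for j :: 'i
    have "(\<Sum>j\<in>I. s j * v j) = (\<Sum>j\<in>I. if j = j0 then v j else 0)" unfolding s_def by (intro sum.cong) auto
    also have "... = v j0" using I(1) j0 by simp
    moreover have "v j0 \<in> J" using v j0 by simp
    moreover have "s j0 \<notin> J" using prime_idealD(4)[OF J] by (simp add: s_def)
    moreover have "\<forall>j\<in>I. s j \<in> S" using S0 S1 by (simp add: s_def)
    ultimately show "\<exists>s. (\<forall>j\<in>I. s j \<in> S) \<and> (\<exists>j\<in>I. s j \<notin> J) \<and> (\<Sum>j\<in>I. s j * v j) \<in> J"
      using j0 by metis
  next
    case (insert t0 T)
    fix I :: "'i set" and v c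
    assume I: "finite I" "card (insert t0 T) < card I"
      and c: "\<forall>j\<in>I. \<forall>t\<in>insert t0 T. c j t \<in> S"
      and v: "\<forall>j\<in>I. v j - (\<Sum>t\<in>insert t0 T. c j t * g t) \<in> J"
    have cardT: "card (insert t0 T) = Suc (card T)" using insert by simp
    have vexp: "v j - (\<Sum>t\<in>insert t0 T. c j t * g t) = v j - c j t0 * g t0 - (\<Sum>t\<in>T. c j t * g t)" for j
      using insert by (simp add: algebra_simps)
    show "\<exists>s. (\<forall>j\<in>I. s j \<in> S) \<and> (\<exists>j\<in>I. s j \<notin> J) \<and> (\<Sum>j\<in>I. s j * v j) \<in> J"
    proof (cases "\<forall>j\<in>I. c j t0 \<in> J")
      case True
      have "\<forall>j\<in>I. v j - (\<Sum>t\<in>T. c j t * g t) \<in> J"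
      proof
        fix j assume j: "j \<in> I"
        have "v j - (\<Sum>t\<in>T. c j t * g t) = (v j - (\<Sum>t\<in>insert t0 T. c j t * g t)) + c j t0 * g t0"
          using vexp[of j] by (simp add: algebra_simps)
        also have "\<dots> \<in> J" using v j True Jid by (intro is_idealD(2) is_idealD(4)) auto
        finally show "v j - (\<Sum>t\<in>T. c j t * g t) \<in> J" .
      qed
      moreover have "card T < card I" using I(2) cardT by simp
      moreover have "\<forall>j\<in>I. \<forall>t\<in>T. c j t \<in> S" using c by simp
      ultimately show ?thesis using insert.IH[OF I(1)] by blast
    next
      case False
      then obtain j0 where j0: "j0 \<in> I" "c j0 t0 \<notin> J" by blast
      define \<kappa> where "\<kappa> = c j0 t0"
      have \<kappa>S: "\<kappa> \<in> S" using c j0 unfolding \<kappa>_def by simp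
      define I' where "I' = I - {j0}"
      define v' where "v' j = \<kappa> * v j - c j t0 * v j0" for j
      define c' where "c' j t = \<kappa> * c j t - c j t0 * c j0 t" for j t
      have I'fin: "finite I'" using I(1) unfolding I'_def by simp
      have I'card: "card T < card I'" using I(2) cardT j0(1) I(1) unfolding I'_def by simp
      have c'S: "\<forall>j\<in>I'. \<forall>t\<in>T. c' j t \<in> S"
        using c j0 \<kappa>S unfolding c'_def I'_def by (auto intro!: Sdiff Smult)
      have v'J: "\<forall>j\<in>I'. v' j - (\<Sum>t\<in>T. c' j t * g t) \<in> J"
      proof
        fix j assume j: "j \<in> I'"
        have "v' j - (\<Sum>t\<in>T. c' j t * g t) =
            \<kappa> * (v j - (\<Sum>t\<in>insert t0 T. c j t * g t)) - c j t0 * (v j0 - (\<Sum>t\<in>insert t0 T. c j0 t * g t))"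
          unfolding vexp v'_def c'_def \<kappa>_def
          by (simp add: algebra_simps sum_subtractf sum_distrib_left)
        also have "\<dots> \<in> J"
        proof -
          have a: "v j - (\<Sum>t\<in>insert t0 T. c j t * g t) \<in> J" using v j unfolding I'_def by auto
          have b: "v j0 - (\<Sum>t\<in>insert t0 T. c j0 t * g t) \<in> J" using v j0 by auto
          show ?thesis by (rule is_ideal_diff[OF Jid is_idealD(3)[OF Jid a] is_idealD(3)[OF Jid b]])
        qed
        finally show "v' j - (\<Sum>t\<in>T. c' j t * g t) \<in> J" .
      qed
      obtain s' where s': "\<forall>j\<in>I'. s' j \<in> S" "\<exists>j\<in>I'. s' j \<notin> J" "(\<Sum>j\<in>I'. s' j * v' j) \<in> J"
        using insert.IH[OF I'fin I'card c'S v'J] by blast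
      define s where "s j = (if j = j0 then - (\<Sum>i\<in>I'. s' i * c i t0) else s' j * \<kappa>)" for j
      have "(\<Sum>j\<in>I. s j * v j) = s j0 * v j0 + (\<Sum>j\<in>I'. s j * v j)"
        using I(1) j0(1) unfolding I'_def by (simp add: sum.remove)
      also have "(\<Sum>j\<in>I'. s j * v j) = (\<Sum>j\<in>I'. s' j * \<kappa> * v j)"
        unfolding s_def I'_def by (intro sum.cong) auto
      also have "s j0 * v j0 + (\<Sum>j\<in>I'. s' j * \<kappa> * v j) = (\<Sum>j\<in>I'. s' j * v' j)"
        unfolding s_def v'_def
        by (simp add: algebra_simps sum_subtractf sum_distrib_left sum_distrib_right)
      finally have sumJ: "(\<Sum>j\<in>I. s j * v j) \<in> J" using s'(3) by simp
      have sS: "\<forall>j\<in>I. s j \<in> S"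
      proof
        fix j assume "j \<in> I"
        show "s j \<in> S"
        proof (cases "j = j0")
          case True
          have "(\<Sum>i\<in>I'. s' i * c i t0) \<in> S"
            using s'(1) c unfolding I'_def by (intro Ssum Smult) auto
          then show ?thesis using True Sdiff[OF S0] by (simp add: s_def)
        next
          case False
          then show ?thesis using s'(1) \<open>j \<in> I\<close> \<kappa>S unfolding s_def I'_def by (auto intro: Smult)
        qed
      qed
      obtain j1 where j1: "j1 \<in> I'" "s' j1 \<notin> J" using s'(2) by blast
      have "s j1 = s' j1 * \<kappa>" using j1(1) unfolding s_def I'_def by simp
      moreover have "s' j1 * \<kappa> \<notin> J"
        using J j1(2) j0(2) unfolding prime_ideal_def \<kappa>_def by blast
      ultimately have "s j1 \<notin> J" by simp
      moreover have "j1 \<in> I" using j1(1) unfolding I'_def by simp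
      ultimately have "\<exists>j\<in>I. s j \<notin> J" by blast
      then show ?thesis using sS sumJ by blast
    qed
  }
qed



section \<open>Incomparability for dense subgroups\<close>

lemma tv_update:
  fixes F :: "'a::ab_group_add set"
  assumes "finite F" "a \<in> F"
  shows "(\<Sum>b\<in>F. nmult ((e(a := k)) b) b) = nmult k a + (\<Sum>b\<in>F - {a}. nmult (e b) b)"
    "(\<Sum>b\<in>F. nmult (e b) b) = nmult (e a) a + (\<Sum>b\<in>F - {a}. nmult (e b) b)"
proof -
  show "(\<Sum>b\<in>F. nmult ((e(a := k)) b) b) = nmult k a + (\<Sum>b\<in>F - {a}. nmult (e b) b)"
    using assms by (simp add: sum.remove)
  show "(\<Sum>b\<in>F. nmult (e b) b) = nmult (e a) a + (\<Sum>b\<in>F - {a}. nmult (e b) b)"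
    using assms by (simp add: sum.remove)
qed

lemma incomparability:
  fixes J P :: "('a::ab_group_add \<Rightarrow>\<^sub>0 'k::comm_ring_1) set"
  assumes J: "prime_ideal J" and P: "is_ideal P" and JP: "J \<subseteq> P" and PB: "galg B \<inter> P \<subseteq> J"
    and B: "subgrp B" "dense B"
  shows "P \<subseteq> J"
proof
  fix x assume xP: "x \<in> P"
  show "x \<in> J"
  proof (rule ccontr)
    assume xJ: "x \<notin> J"
    have Jid: "is_ideal J" using prime_idealD(1)[OF J] .
    define F where "F = keys x"
    have Ffin: "finite F" unfolding F_def by simp
    have "\<forall>a. \<exists>m. m \<ge> 1 \<and> nmult m a \<in> B" using B(2) unfolding dense_def isol_def by blast
    then obtain n where n: "\<And>a. n a \<ge> 1" "\<And>a. nmult (n a) a \<in> B" by metis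
    define E where "E = PiE F (\<lambda>a. {..<n a})"
    define tv where "tv e = (\<Sum>b\<in>F. nmult (e b) b)" for e
    define T where "T = tv ` E"
    have Tfin: "finite T" unfolding T_def E_def using Ffin by (simp add: finite_PiE)
    define M where "M = {m :: 'a \<Rightarrow>\<^sub>0 'k. \<exists>s. (\<forall>t\<in>T. s t \<in> galg B) \<and> m = (\<Sum>t\<in>T. s t * single t 1)}"
    have M_add: "m1 + m2 \<in> M" if m1: "m1 \<in> M" and m2: "m2 \<in> M" for m1 m2
    proof -
      obtain s1 where s1: "\<forall>t\<in>T. s1 t \<in> galg B" "m1 = (\<Sum>t\<in>T. s1 t * single t 1)"
        using m1 unfolding M_def by blast
      obtain s2 where s2: "\<forall>t\<in>T. s2 t \<in> galg B" "m2 = (\<Sum>t\<in>T. s2 t * single t 1)"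
        using m2 unfolding M_def by blast
      have "m1 + m2 = (\<Sum>t\<in>T. (s1 t + s2 t) * single t 1)"
        unfolding s1(2) s2(2) by (simp add: sum.distrib algebra_simps)
      then show ?thesis unfolding M_def using s1(1) s2(1)
        by (intro CollectI exI[of _ "\<lambda>t. s1 t + s2 t"]) (auto intro: galg_add)
    qed
    have M_0: "0 \<in> M" unfolding M_def by (intro CollectI exI[of _ "\<lambda>t. 0"]) simp
    have M_sum: "sum h X \<in> M" if "\<And>i. i \<in> X \<Longrightarrow> h i \<in> M" for h and X :: "'z set"
      using that by (induction X rule: infinite_finite_induct) (auto simp: M_0 M_add)
    have M_gen: "b * single t 1 \<in> M" if "b \<in> galg B" "t \<in> T" for b t
    proof -
      have "(\<Sum>t'\<in>T. (if t' = t then b else 0) * single t' 1) = (\<Sum>t'\<in>T. if t' = t then b * single t' 1 else 0)"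
        by (intro sum.cong) auto
      also have "\<dots> = b * single t 1" using that(2) Tfin by simp
      finally have "b * single t 1 = (\<Sum>t'\<in>T. (if t' = t then b else 0) * single t' 1)" by simp
      then show ?thesis unfolding M_def using that(1)
        by (intro CollectI exI[of _ "\<lambda>t'. if t' = t then b else 0"]) auto
    qed
    have shift: "\<exists>t'\<in>T. \<exists>\<beta>\<in>B. a + t = t' + \<beta>" if a: "a \<in> F" and t: "t \<in> T" for a t
    proof -
      obtain e where e: "e \<in> E" "t = tv e" using t unfolding T_def by blast
      have ea: "e a < n a" using e(1) a unfolding E_def by (auto simp: PiE_def Pi_def)
      show ?thesis
      proof (cases "Suc (e a) < n a")
        case True
        define e' where "e' = e(a := Suc (e a))"
        have "e' \<in> E" using e(1) True a unfolding E_def e'_def by (auto simp: PiE_def Pi_def extensional_def)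
        moreover have "tv e' = a + t"
          unfolding e(2) tv_def e'_def using tv_update[OF Ffin a, of e] by (simp add: nmult_Suc add.assoc)
        ultimately show ?thesis using subgrpD(1)[OF B(1)] unfolding T_def by force
      next
        case False
        then have na: "n a = Suc (e a)" using ea by simp
        define e' where "e' = e(a := 0)"
        have "e' \<in> E" using e(1) n(1)[of a] a unfolding E_def e'_def
          by (auto simp: PiE_def Pi_def extensional_def)
        moreover have "a + t = tv e' + nmult (n a) a"
          unfolding e(2) tv_def e'_def using tv_update[OF Ffin a, of e] na
          by (simp add: nmult_Suc algebra_simps)
        ultimately show ?thesis using n(2)[of a] unfolding T_def by force
      qed
    qed
    have M_single: "single a c * m \<in> M" if a: "a \<in> F" and m: "m \<in> M" for a c m
    proof -
      obtain s where s: "\<forall>t\<in>T. s t \<in> galg B" "m = (\<Sum>t\<in>T. s t * single t 1)"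
        using m unfolding M_def by blast
      have "single a c * m = (\<Sum>t\<in>T. single a c * (s t * single t 1))"
        unfolding s(2) by (simp add: sum_distrib_left)
      also have "\<dots> \<in> M"
      proof (rule M_sum)
        fix t assume t: "t \<in> T"
        obtain t' \<beta> where tb: "t' \<in> T" "\<beta> \<in> B" "a + t = t' + \<beta>" using shift[OF a t] by blast
        have "single a c * (s t * single t 1) = (s t * single \<beta> c) * single t' 1"
        proof -
          have "single a c * (s t * single t 1) = s t * (single a c * single t 1)"
            by (rule mult.left_commute)
          also have "single a c * single t 1 = single \<beta> c * single t' 1"
            by (simp add: mult_single tb(3) add.commute)
          finally show ?thesis by (simp only: mult.assoc)
        qed
        moreover have "s t * single \<beta> c \<in> galg B"
          using s(1) t tb(2) B(1) by (intro galg_mult galg_single) auto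
        ultimately show "single a c * (s t * single t 1) \<in> M" using M_gen tb(1) by simp
      qed
      finally show ?thesis .
    qed
    have M_x: "x * m \<in> M" if "m \<in> M" for m
    proof -
      have "x * m = (\<Sum>a\<in>F. single a (lookup x a) * m)"
        unfolding F_def by (subst pm_expand[of x]) (simp add: sum_distrib_right)
      also have "\<dots> \<in> M" using M_single that by (intro M_sum) auto
      finally show ?thesis .
    qed
    have T0: "0 \<in> T"
    proof -
      have "(\<lambda>b\<in>F. 0) \<in> E" using n(1) unfolding E_def by (auto simp: PiE_def Pi_def Suc_le_eq)
      moreover have "tv (\<lambda>b\<in>F. 0) = 0" unfolding tv_def by simp
      ultimately show ?thesis unfolding T_def by force
    qed
    have pow: "x ^ i \<in> M" for i
    proof (induction i)
      case 0
      have "(1::'a \<Rightarrow>\<^sub>0 'k) * single 0 1 \<in> M" using M_gen[OF galg_one[OF B(1)] T0] .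
      then show ?case by simp
    next
      case (Suc i)
      then show ?case using M_x by simp
    qed
    then have "\<forall>i. \<exists>s. (\<forall>t\<in>T. s t \<in> galg B) \<and> x ^ i = (\<Sum>t\<in>T. s t * single t 1)"
      unfolding M_def by blast
    then obtain c where c: "\<And>i. \<forall>t\<in>T. c i t \<in> galg B" "\<And>i. x ^ i = (\<Sum>t\<in>T. c i t * single t 1)"
      by metis
    have "\<exists>s. (\<forall>j\<in>{..card T}. s j \<in> galg B) \<and> (\<exists>j\<in>{..card T}. s j \<notin> J) \<and>
        (\<Sum>j\<in>{..card T}. s j * x ^ j) \<in> J"
    proof (rule lin_dep[OF J _ _ _ _ Tfin])
      show "a * b \<in> galg B" if "a \<in> galg B" "b \<in> galg B" for a b :: "'a \<Rightarrow>\<^sub>0 'k" using B(1) that by (rule galg_mult)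
      show "a - b \<in> galg B" if "a \<in> galg B" "b \<in> galg B" for a b :: "'a \<Rightarrow>\<^sub>0 'k" using that by (rule galg_diff)
      show "(1 :: 'a \<Rightarrow>\<^sub>0 'k) \<in> galg B" using B(1) by (rule galg_one)
      show "0 \<in> galg B" by simp
      show "finite {..card T}" by simp
      show "card T < card {..card T}" by simp
      show "\<forall>j\<in>{..card T}. \<forall>t\<in>T. c j t \<in> galg B" using c(1) by blast
      show "\<forall>j\<in>{..card T}. x ^ j - (\<Sum>t\<in>T. c j t * single t 1) \<in> J"
        using c(2) is_idealD(1)[OF Jid] by simp
    qed
    then obtain s where s: "\<forall>j\<in>{..card T}. s j \<in> galg B" "\<exists>j\<in>{..card T}. s j \<notin> J"
      "(\<Sum>j\<in>{..card T}. s j * x ^ j) \<in> J" by blast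
    have key: "\<forall>s. (\<forall>i\<le>m. s i \<in> galg B) \<longrightarrow> (\<Sum>i\<le>m. s i * x ^ i) \<in> J \<longrightarrow> (\<forall>i\<le>m. s i \<in> J)" for m
    proof (induction m)
      case 0
      then show ?case by simp
    next
      case (Suc m)
      show ?case
      proof (intro allI impI)
        fix s :: "nat \<Rightarrow> 'a \<Rightarrow>\<^sub>0 'k" and i :: nat
        assume sB: "\<forall>i\<le>Suc m. s i \<in> galg B" and sJ: "(\<Sum>i\<le>Suc m. s i * x ^ i) \<in> J" and i: "i \<le> Suc m"
        define Y where "Y = (\<Sum>i\<le>m. s (Suc i) * x ^ i)"
        have split: "(\<Sum>i\<le>Suc m. s i * x ^ i) = s 0 + x * Y"
        proof -
          have "(\<Sum>i\<le>Suc m. s i * x ^ i) = s 0 * x ^ 0 + (\<Sum>i\<le>m. s (Suc i) * x ^ Suc i)"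
            by (rule sum.atMost_Suc_shift)
          also have "\<dots> = s 0 + x * Y" unfolding Y_def by (simp add: sum_distrib_left mult_ac)
          finally show ?thesis .
        qed
        have "x * Y \<in> P" using xP P by (rule is_idealD(4)[rotated])
        moreover have "s 0 + x * Y \<in> P" using sJ JP split by auto
        ultimately have "s 0 \<in> P" using is_ideal_diff[OF P, of "s 0 + x * Y" "x * Y"] by simp
        then have s0J: "s 0 \<in> J" using PB sB by auto
        then have "x * Y \<in> J" using sJ split is_ideal_diff[OF Jid, of "s 0 + x * Y" "s 0"] by simp
        then have "Y \<in> J" using prime_idealD(3)[OF J] xJ by blast
        moreover have "\<forall>i\<le>m. s (Suc i) \<in> galg B" using sB by auto
        ultimately have "\<forall>i\<le>m. (\<lambda>i. s (Suc i)) i \<in> J" using Suc.IH[rule_format, of "\<lambda>i. s (Suc i)"] unfolding Y_def by blast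
        then show "s i \<in> J" using s0J i by (cases i) auto
      qed
    qed
    then have "\<forall>j\<in>{..card T}. s j \<in> J" using s(1,3) by auto
    then show False using s(2) by blast
  qed
qed



section \<open>A separating additive functional\<close>

lemma choose_lambda:
  fixes F :: "'a set" and W :: "'d set" and z :: "'d \<Rightarrow> 'a \<Rightarrow> int"
  assumes F: "finite F" and W: "finite W" and nz: "\<forall>d\<in>W. \<exists>x\<in>F. z d x \<noteq> 0"
  shows "\<exists>wt :: 'a \<Rightarrow> real. \<forall>d\<in>W. (\<Sum>x\<in>F. of_int (z d x) * wt x) \<noteq> 0"
proof -
  obtain idx :: "'a \<Rightarrow> nat" and m where idx: "idx ` F = {i. i < m}" "inj_on idx F"
    using finite_imp_inj_to_nat_seg[OF F] by blast
  define p where "p d = (\<Sum>x\<in>F. monom (of_int (z d x) :: real) (idx x))" for d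
  have pval: "poly (p d) t = (\<Sum>x\<in>F. of_int (z d x) * t ^ idx x)" for d t
    unfolding p_def by (simp add: poly_sum poly_monom)
  have pnz: "p d \<noteq> 0" if d: "d \<in> W" for d
  proof
    assume p0: "p d = 0"
    obtain x0 where x0: "x0 \<in> F" "z d x0 \<noteq> 0" using nz d by blast
    have "coeff (p d) (idx x0) = (\<Sum>x\<in>F. if idx x = idx x0 then (of_int (z d x) :: real) else 0)"
      unfolding p_def by (simp add: coeff_sum)
    also have "\<dots> = (\<Sum>x\<in>F. if x = x0 then (of_int (z d x) :: real) else 0)"
      using idx(2) x0(1) by (intro sum.cong refl) (auto dest: inj_onD)
    also have "\<dots> = of_int (z d x0)" using F x0(1) by simp
    finally have "coeff (p d) (idx x0) \<noteq> 0" using x0(2) by simp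
    then show False using p0 by simp
  qed
  have "finite (\<Union>d\<in>W. {t. poly (p d) t = 0})"
    using W pnz poly_roots_finite by blast
  then obtain t :: real where t: "t \<notin> (\<Union>d\<in>W. {t. poly (p d) t = 0})"
    using ex_new_if_finite[OF infinite_UNIV_char_0] by blast
  show ?thesis
    by (rule exI[of _ "\<lambda>x. t ^ idx x"]) (use t pval in auto)
qed

definition indepE :: "'a::ab_group_add set \<Rightarrow> 'a set \<Rightarrow> bool" where
  "indepE E F \<longleftrightarrow> (\<forall>c. (\<Sum>x\<in>F. zmult (c x) x) \<in> E \<longrightarrow> (\<forall>x\<in>F. c x = 0))"

lemma sum_zmult_diff:
  "(\<Sum>x\<in>F. zmult (c x) x) - (\<Sum>x\<in>F. zmult (d x) x) = (\<Sum>x\<in>F. zmult (c x - d x) x)"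
  by (simp add: zmult_diff_left sum_subtractf)

lemma sum_zmult_scale:
  "zmult n (\<Sum>x\<in>F. zmult (c x) x) = (\<Sum>x\<in>F. zmult (n * c x) x)"
  by (simp add: zmult_sum zmult_mult)

lemma exists_psi:
  fixes E :: "'a::ab_group_add set"
  assumes E: "subgrp E" "isol E = E" and fr: "finite_rank (UNIV :: 'a set)"
    and W: "finite W" "W \<inter> E = {}"
  shows "\<exists>\<psi> :: 'a \<Rightarrow> real. (\<forall>x y. \<psi> (x + y) = \<psi> x + \<psi> y) \<and> (\<forall>e\<in>E. \<psi> e = 0) \<and> (\<forall>d\<in>W. \<psi> d \<noteq> 0)"
proof -
  obtain N where N0: "\<forall>F. finite F \<and> F \<subseteq> (UNIV :: 'a set) \<and> z_indep F \<longrightarrow> card F \<le> N"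
    using fr unfolding finite_rank_def by (elim exE) (rule that)
  have N: "card F \<le> N" if "finite F" "z_indep F" for F :: "'a set" using N0 that by blast
  have ind_z: "z_indep F" if ind: "indepE E F" for F :: "'a set"
    unfolding z_indep_def
  proof (intro allI impI)
    fix c assume "(\<Sum>x\<in>F. zmult (c x) x) = 0"
    then have "(\<Sum>x\<in>F. zmult (c x) x) \<in> E" using subgrpD(1)[OF E(1)] by simp
    then show "\<forall>x\<in>F. c x = 0" using ind unfolding indepE_def by blast
  qed
  define K where "K = {card F | F. finite F \<and> indepE E F}"
  have "0 \<in> K" unfolding K_def indepE_def by (intro CollectI exI[of _ "{}"]) auto
  moreover have "finite K"
    by (rule finite_subset[of _ "{..N}"]) (auto simp: K_def intro: N ind_z)
  ultimately obtain F where F: "finite F" "indepE E F" "card F = Max K"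
    using Max_in[of K] unfolding K_def by force
  have Fmax: "card F' \<le> card F" if "finite F'" "indepE E F'" for F' :: "'a set"
    using F(3) \<open>finite K\<close> that unfolding K_def by (auto intro: Max_ge)
  have rep: "\<exists>n z. n > 0 \<and> zmult n a - (\<Sum>x\<in>F. zmult (z x) x) \<in> E" for a
  proof (cases "a \<in> F")
    case True
    have "(\<Sum>x\<in>F. zmult (if x = a then 1 else 0) x) = (\<Sum>x\<in>F. if x = a then x else 0)"
      by (intro sum.cong) auto
    also have "\<dots> = a" using True F(1) by simp
    finally have "zmult 1 a - (\<Sum>x\<in>F. zmult (if x = a then 1 else 0) x) \<in> E"
      using subgrpD(1)[OF E(1)] by simp
    then show ?thesis by (intro exI[of _ 1]) auto
  next
    case False
    have "card (insert a F) > card F" using False F(1) by simp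
    then have "\<not> indepE E (insert a F)" using Fmax[of "insert a F"] F(1) by auto
    then obtain c where c: "(\<Sum>x\<in>insert a F. zmult (c x) x) \<in> E" "\<exists>x\<in>insert a F. c x \<noteq> 0"
      unfolding indepE_def by blast
    have cs: "(\<Sum>x\<in>insert a F. zmult (c x) x) = zmult (c a) a + (\<Sum>x\<in>F. zmult (c x) x)"
      using False F(1) by simp
    have "c a \<noteq> 0"
    proof
      assume "c a = 0"
      then have "(\<Sum>x\<in>F. zmult (c x) x) \<in> E" using c(1) cs by simp
      then have "\<forall>x\<in>F. c x = 0" using F(2) unfolding indepE_def by blast
      then show False using c(2) \<open>c a = 0\<close> by auto
    qed
    show ?thesis
    proof (cases "c a > 0")
      case True
      have eq: "zmult (c a) a - (\<Sum>x\<in>F. zmult (- c x) x) = zmult (c a) a + (\<Sum>x\<in>F. zmult (c x) x)"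
        by (simp add: zmult_uminus_left sum_negf)
      have "zmult (c a) a - (\<Sum>x\<in>F. zmult (- c x) x) \<in> E"
        unfolding eq using c(1)[unfolded cs] .
      then show ?thesis using True by (intro exI[of _ "c a"] exI[of _ "\<lambda>x. - c x"]) simp
    next
      case False
      then have pos: "- c a > 0" using \<open>c a \<noteq> 0\<close> by simp
      have "zmult (- c a) a - (\<Sum>x\<in>F. zmult (c x) x) = - (zmult (c a) a + (\<Sum>x\<in>F. zmult (c x) x))"
        by (simp add: zmult_uminus_left)
      moreover have "- (zmult (c a) a + (\<Sum>x\<in>F. zmult (c x) x)) \<in> E"
        by (rule subgrp_uminus[OF E(1) c(1)[unfolded cs]])
      ultimately show ?thesis using pos by (intro exI[of _ "- c a"] exI[of _ c]) simp
    qed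
  qed
  then obtain nn zz where nnzz: "\<And>a. nn a > (0::int)" "\<And>a. zmult (nn a) a - (\<Sum>x\<in>F. zmult (zz a x) x) \<in> E"
    by metis
  have uniq: "\<forall>x\<in>F. n * zz a x = nn a * z x"
    if n: "n > 0" and r: "zmult n a - (\<Sum>x\<in>F. zmult (z x) x) \<in> E" for n z a
  proof -
    have "zmult (nn a) (zmult n a - (\<Sum>x\<in>F. zmult (z x) x)) - zmult n (zmult (nn a) a - (\<Sum>x\<in>F. zmult (zz a x) x)) \<in> E"
      by (rule subgrp_diff[OF E(1) subgrp_zmult[OF E(1) r] subgrp_zmult[OF E(1) nnzz(2)[of a]]])
    also have "zmult (nn a) (zmult n a - (\<Sum>x\<in>F. zmult (z x) x)) - zmult n (zmult (nn a) a - (\<Sum>x\<in>F. zmult (zz a x) x))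
        = (\<Sum>x\<in>F. zmult (n * zz a x - nn a * z x) x)"
      by (simp add: zmult_diff sum_zmult_scale zmult_mult[symmetric] mult.commute sum_zmult_diff[symmetric])
    finally show ?thesis using F(2) unfolding indepE_def by force
  qed
  have rep_add: "zmult (nn a * nn b) (a + b) - (\<Sum>x\<in>F. zmult (nn b * zz a x + nn a * zz b x) x) \<in> E" for a b
  proof -
    have "zmult (nn b) (zmult (nn a) a - (\<Sum>x\<in>F. zmult (zz a x) x)) + zmult (nn a) (zmult (nn b) b - (\<Sum>x\<in>F. zmult (zz b x) x)) \<in> E"
      by (rule subgrp_add[OF E(1) subgrp_zmult[OF E(1) nnzz(2)[of a]] subgrp_zmult[OF E(1) nnzz(2)[of b]]])
    also have "zmult (nn b) (zmult (nn a) a - (\<Sum>x\<in>F. zmult (zz a x) x)) + zmult (nn a) (zmult (nn b) b - (\<Sum>x\<in>F. zmult (zz b x) x))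
       = zmult (nn a * nn b) (a + b) - (\<Sum>x\<in>F. zmult (nn b * zz a x + nn a * zz b x) x)"
      by (simp add: zmult_diff zmult_plus sum_zmult_scale zmult_mult[symmetric] zmult_add sum.distrib mult.commute)
    finally show ?thesis .
  qed
  define W' where "W' = W"
  have nzW: "\<forall>d\<in>W. \<exists>x\<in>F. zz d x \<noteq> 0"
  proof
    fix d assume d: "d \<in> W"
    show "\<exists>x\<in>F. zz d x \<noteq> 0"
    proof (rule ccontr)
      assume "\<not> (\<exists>x\<in>F. zz d x \<noteq> 0)"
      then have "zmult (nn d) d \<in> E" using nnzz(2)[of d] by simp
      moreover have "zmult (nn d) d = nmult (nat (nn d)) d"
        using nnzz(1)[of d] by (simp add: zmult_def)
      moreover have "nat (nn d) \<ge> 1" using nnzz(1)[of d] by simp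
      ultimately have "d \<in> isol E" unfolding isol_def by auto
      then show False using E(2) W(2) d by auto
    qed
  qed
  obtain wt :: "'a \<Rightarrow> real" where lam: "\<forall>d\<in>W. (\<Sum>x\<in>F. of_int (zz d x) * wt x) \<noteq> 0"
    using choose_lambda[OF F(1) W(1) nzW] by blast
  define \<psi> where "\<psi> a = (\<Sum>x\<in>F. of_int (zz a x) * wt x) / of_int (nn a)" for a
  have psi_rep: "\<psi> a = (\<Sum>x\<in>F. of_int (z x) * wt x) / of_int n"
    if n: "n > 0" and r: "zmult n a - (\<Sum>x\<in>F. zmult (z x) x) \<in> E" for n z a
  proof -
    have u: "\<forall>x\<in>F. n * zz a x = nn a * z x" using uniq[OF n r] .
    have "of_int n * (\<Sum>x\<in>F. of_int (zz a x) * wt x) = of_int (nn a) * (\<Sum>x\<in>F. of_int (z x) * (wt x :: real))"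
    proof -
      have "of_int n * (\<Sum>x\<in>F. of_int (zz a x) * wt x) = (\<Sum>x\<in>F. of_int (n * zz a x) * (wt x :: real))"
        by (simp add: sum_distrib_left mult.assoc)
      also have "\<dots> = (\<Sum>x\<in>F. of_int (nn a * z x) * wt x)" using u by (intro sum.cong) auto
      also have "\<dots> = of_int (nn a) * (\<Sum>x\<in>F. of_int (z x) * wt x)"
        by (simp add: sum_distrib_left mult.assoc)
      finally show ?thesis .
    qed
    then show ?thesis unfolding \<psi>_def using n nnzz(1)[of a]
      by (simp add: field_simps)
  qed
  have add: "\<psi> (a + b) = \<psi> a + \<psi> b" for a b
  proof -
    have "\<psi> (a + b) = (\<Sum>x\<in>F. of_int (nn b * zz a x + nn a * zz b x) * wt x) / of_int (nn a * nn b)"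
      using nnzz(1)[of a] nnzz(1)[of b] rep_add[of a b] by (intro psi_rep) auto
    also have "\<dots> = (of_int (nn b) * (\<Sum>x\<in>F. of_int (zz a x) * wt x) + of_int (nn a) * (\<Sum>x\<in>F. of_int (zz b x) * wt x))
        / (of_int (nn a) * of_int (nn b))"
      by (simp add: sum_distrib_left sum.distrib algebra_simps)
    also have "\<dots> = \<psi> a + \<psi> b" unfolding \<psi>_def using nnzz(1)[of a] nnzz(1)[of b]
      by (simp add: field_simps)
    finally show ?thesis .
  qed
  have zero: "\<psi> e = 0" if "e \<in> E" for e
  proof -
    have "zmult 1 e - (\<Sum>x\<in>F. zmult ((\<lambda>x. 0) x) x) \<in> E" using that by simp
    then have "\<psi> e = (\<Sum>x\<in>F. of_int ((\<lambda>x. 0::int) x) * wt x) / of_int 1"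
      by (intro psi_rep) auto
    then show ?thesis by simp
  qed
  have nz: "\<psi> d \<noteq> 0" if "d \<in> W" for d
    using lam that nnzz(1)[of d] unfolding \<psi>_def by simp
  show ?thesis using add zero nz by blast
qed

lemma additive_diff:
  fixes \<psi> :: "'a::ab_group_add \<Rightarrow> real"
  assumes "\<forall>x y. \<psi> (x + y) = \<psi> x + \<psi> y"
  shows "\<psi> (x - y) = \<psi> x - \<psi> y"
  using assms by (metis add_diff_cancel_left' diff_add_cancel eq_diff_eq)

lemma upp:
  fixes E :: "'a::ab_group_add set"
  assumes E: "subgrp E" "isol E = E" and fr: "finite_rank (UNIV :: 'a set)"
    and U: "finite U" "U \<noteq> {}" "\<forall>u\<in>U. \<forall>u'\<in>U. u - u' \<in> E \<longrightarrow> u = u'"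
    and V: "finite V" "V \<noteq> {}" "\<forall>v\<in>V. \<forall>v'\<in>V. v - v' \<in> E \<longrightarrow> v = v'"
  shows "\<exists>u0\<in>U. \<exists>v0\<in>V. \<forall>u\<in>U. \<forall>v\<in>V. u + v - (u0 + v0) \<in> E \<longrightarrow> u = u0 \<and> v = v0"
proof -
  define W where "W = (\<lambda>(u, u'). u - u') ` {p \<in> U \<times> U. fst p \<noteq> snd p} \<union> (\<lambda>(v, v'). v - v') ` {p \<in> V \<times> V. fst p \<noteq> snd p}"
  have Wfin: "finite W" unfolding W_def using U(1) V(1) by auto
  have WE: "W \<inter> E = {}" unfolding W_def using U(3) V(3) by auto
  obtain \<psi> :: "'a \<Rightarrow> real" where psi: "\<forall>x y. \<psi> (x + y) = \<psi> x + \<psi> y" "\<forall>e\<in>E. \<psi> e = 0" "\<forall>d\<in>W. \<psi> d \<noteq> 0"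
    using exists_psi[OF E fr Wfin WE] by blast
  have psid: "\<psi> (x - y) = \<psi> x - \<psi> y" for x y using additive_diff[OF psi(1)] .
  have "Max (\<psi> ` U) \<in> \<psi> ` U" using U(1,2) by simp
  then obtain u0 where u0': "u0 \<in> U" "\<psi> u0 = Max (\<psi> ` U)" by auto
  have u0: "u0 \<in> U" "\<forall>u\<in>U. \<psi> u \<le> \<psi> u0" using u0' U(1) by auto
  have "Max (\<psi> ` V) \<in> \<psi> ` V" using V(1,2) by simp
  then obtain v0 where v0': "v0 \<in> V" "\<psi> v0 = Max (\<psi> ` V)" by auto
  have v0: "v0 \<in> V" "\<forall>v\<in>V. \<psi> v \<le> \<psi> v0" using v0' V(1) by auto
  have "\<forall>u\<in>U. \<forall>v\<in>V. u + v - (u0 + v0) \<in> E \<longrightarrow> u = u0 \<and> v = v0"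
  proof (intro ballI impI)
    fix u v assume u: "u \<in> U" and v: "v \<in> V" and e: "u + v - (u0 + v0) \<in> E"
    have "\<psi> (u + v - (u0 + v0)) = 0" using psi(2) e by blast
    then have sum: "\<psi> u + \<psi> v = \<psi> u0 + \<psi> v0" using psid psi(1) by simp
    have l1: "\<psi> u \<le> \<psi> u0" using u0(2) u by blast
    have l2: "\<psi> v \<le> \<psi> v0" using v0(2) v by blast
    have eu: "\<psi> u = \<psi> u0" using l1 l2 sum by linarith
    have ev: "\<psi> v = \<psi> v0" using l1 l2 sum by linarith
    have "u = u0"
    proof (rule ccontr)
      assume "u \<noteq> u0"
      then have "u - u0 \<in> W" unfolding W_def using u u0(1) by force
      then show False using psi(3) psid eu by force
    qed
    moreover have "v = v0"
    proof (rule ccontr)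
      assume "v \<noteq> v0"
      then have "v - v0 \<in> W" unfolding W_def using v v0(1) by force
      then show False using psi(3) psid ev by force
    qed
    ultimately show "u = u0 \<and> v = v0" by simp
  qed
  then show ?thesis using u0(1) v0(1) by blast
qed



section \<open>Extended ideals from isolated subgroups\<close>

lemma is_ideal_in_UNIV: "is_ideal P \<Longrightarrow> is_ideal_in (galg UNIV) P"
  by (simp add: is_ideal_def)

lemma memJ:
  fixes P :: "('a::ab_group_add \<Rightarrow>\<^sub>0 'k::comm_ring_1) set"
  assumes P: "is_ideal P" and E: "subgrp E"
  shows "f \<in> ideal_gen_in UNIV (P \<inter> galg E) \<longleftrightarrow> (\<forall>a. proj E (single a 1 * f) \<in> P)"
proof -
  define J where "J = ideal_gen_in UNIV (P \<inter> galg E)"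
  have Jid: "is_ideal J" unfolding J_def by (rule gen_is_ideal)
  have JP: "J \<subseteq> P" unfolding J_def using P by (intro gen_subset) (auto simp: is_ideal_def)
  have JE: "J \<inter> galg E = P \<inter> galg E"
  proof
    show "J \<inter> galg E \<subseteq> P \<inter> galg E" using JP by blast
    show "P \<inter> galg E \<subseteq> J \<inter> galg E" unfolding J_def using gen_base[of "UNIV :: ('a \<Rightarrow>\<^sub>0 'k) set"] by blast
  qed
  have cJ: "controls UNIV J E" unfolding controls_def using JE by (simp add: J_def)
  have projJ: "\<forall>g\<in>J. proj E g \<in> J"
    using controls_proj[OF subgrp_UNIV is_ideal_in_UNIV[OF Jid] E] cJ by simp
  show ?thesis unfolding J_def[symmetric]
  proof
    assume f: "f \<in> J"
    show "\<forall>a. proj E (single a 1 * f) \<in> P"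
    proof
      fix a
      have "single a 1 * f \<in> J" using f Jid by (rule is_idealD(3)[rotated])
      then show "proj E (single a 1 * f) \<in> P" using projJ JP by blast
    qed
  next
    assume h: "\<forall>a. proj E (single a 1 * f) \<in> P"
    obtain T where T: "finite T" "f = (\<Sum>t\<in>T. single t 1 * proj E (single (- t) 1 * f))"
      using pm_decomp[OF E, of f] by blast
    have "f = (\<Sum>t\<in>T. proj E (single (- t) 1 * f) * single t 1)"
      using T(2) by (simp add: mult.commute)
    also have "\<dots> \<in> J" unfolding J_def
      using h by (intro gen_sum[OF T(1)]) (auto simp: galg_iff keys_proj)
    finally show "f \<in> J" .
  qed
qed

lemma comp_shift:
  fixes P :: "('a::ab_group_add \<Rightarrow>\<^sub>0 'k::comm_ring_1) set"
  assumes P: "is_ideal P" and E: "subgrp E" and e: "e \<in> E"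
  shows "proj E (single (a + e) 1 * f) \<in> P \<longleftrightarrow> proj E (single a 1 * f) \<in> P"
proof -
  have eq: "proj E (single (a + e) 1 * f) = single e 1 * proj E (single a 1 * f)"
  proof -
    have "single (a + e) 1 * f = single e 1 * (single a 1 * f)"
      by (simp add: mult.assoc[symmetric] mult_single add.commute)
    then show ?thesis using proj_single_mult[OF E e] by simp
  qed
  have eq2: "proj E (single a 1 * f) = single (- e) 1 * proj E (single (a + e) 1 * f)"
    unfolding eq by (simp add: mult.assoc[symmetric] mult_single)
  show ?thesis
  proof
    assume "proj E (single (a + e) 1 * f) \<in> P"
    then show "proj E (single a 1 * f) \<in> P" unfolding eq2 using P by (rule is_idealD(3)[rotated])
  next
    assume "proj E (single a 1 * f) \<in> P"
    then show "proj E (single (a + e) 1 * f) \<in> P" unfolding eq using P by (rule is_idealD(3)[rotated])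
  qed
qed

lemma comp_nonzero:
  fixes f :: "'a::ab_group_add \<Rightarrow>\<^sub>0 'k::comm_ring_1"
  assumes "proj E (single a 1 * f) \<noteq> 0"
  shows "\<exists>k\<in>keys f. a + k \<in> E"
proof -
  obtain x where x: "lookup (proj E (single a 1 * f)) x \<noteq> 0"
    using assms poly_mapping_eqI[of "proj E (single a 1 * f)" 0] by auto
  then have "x \<in> E" "lookup f (x - a) \<noteq> 0" by (auto simp: lookup_proj lookup_single_mult split: if_splits)
  then show ?thesis by (intro bexI[of _ "x - a"]) (auto simp: in_keys_iff)
qed

lemma proj_term:
  fixes w :: "'a::ab_group_add \<Rightarrow>\<^sub>0 'k::comm_ring_1"
  assumes E: "subgrp E" and w: "keys w \<subseteq> E"
  shows "proj E (single b 1 * w) = (if b \<in> E then single b 1 * w else 0)"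
proof (cases "b \<in> E")
  case True
  then show ?thesis using proj_single_mult[OF E True, of 1 w] proj_id[OF w] by simp
next
  case False
  then show ?thesis using proj_single_mult_out[OF E w False] by simp
qed

lemma gen_prime:
  fixes P :: "('a::ab_group_add \<Rightarrow>\<^sub>0 'k::comm_ring_1) set"
  assumes P: "prime_ideal P" and E: "subgrp E" "isol E = E" and fr: "finite_rank (UNIV :: 'a set)"
  shows "prime_ideal (ideal_gen_in UNIV (P \<inter> galg E))"
proof -
  define J where "J = ideal_gen_in UNIV (P \<inter> galg E)"
  have Pid: "is_ideal P" using prime_idealD(1)[OF P] .
  have Jid: "is_ideal J" unfolding J_def by (rule gen_is_ideal)
  have JP: "J \<subseteq> P" unfolding J_def using Pid by (intro gen_subset) (auto simp: is_ideal_def)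
  have mem: "f \<in> J \<longleftrightarrow> (\<forall>a. proj E (single a 1 * f) \<in> P)" for f
    unfolding J_def by (rule memJ[OF Pid E(1)])
  define comp where "comp f a = proj E (single a 1 * f)" for f :: "'a \<Rightarrow>\<^sub>0 'k" and a
  have compE: "keys (comp f a) \<subseteq> E" for f a unfolding comp_def by (simp add: keys_proj)
  have nonempty: "\<exists>t\<in>T. comp f (- t) \<notin> P"
    if f: "f \<notin> J" and T: "\<forall>a\<in>keys f. \<exists>t\<in>T. a - t \<in> E" for f T
  proof -
    obtain a where a: "comp f a \<notin> P" using f mem unfolding comp_def by blast
    then have "comp f a \<noteq> 0" using is_idealD(1)[OF Pid] by auto
    then obtain k where k: "k \<in> keys f" "a + k \<in> E" using comp_nonzero unfolding comp_def by blast
    obtain t where t: "t \<in> T" "k - t \<in> E" using T k(1) by blast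
    have "(k - t) - (a + k) \<in> E" using t(2) k(2) E(1) by (rule subgrp_diff[rotated 1])
    moreover have "- t = a + ((k - t) - (a + k))" by simp
    ultimately have "comp f (- t) \<in> P \<longleftrightarrow> comp f a \<in> P"
      unfolding comp_def using comp_shift[OF Pid E(1)] by metis
    then show ?thesis using a t(1) by blast
  qed
  have "x * y \<in> J \<longrightarrow> x \<in> J \<or> y \<in> J" for x y
  proof (rule impI, rule ccontr)
    assume xy: "x * y \<in> J" and nxy: "\<not> (x \<in> J \<or> y \<in> J)"
    obtain Tx where Tx: "finite Tx" "Tx \<subseteq> keys x" "\<forall>t\<in>Tx. \<forall>t'\<in>Tx. t - t' \<in> E \<longrightarrow> t = t'"
      "\<forall>a\<in>keys x. \<exists>t\<in>Tx. a - t \<in> E" "x = (\<Sum>t\<in>Tx. single t 1 * comp x (- t))"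
      using pm_decomp[OF E(1), of x] unfolding comp_def by blast
    obtain Ty where Ty: "finite Ty" "Ty \<subseteq> keys y" "\<forall>t\<in>Ty. \<forall>t'\<in>Ty. t - t' \<in> E \<longrightarrow> t = t'"
      "\<forall>a\<in>keys y. \<exists>t\<in>Ty. a - t \<in> E" "y = (\<Sum>t\<in>Ty. single t 1 * comp y (- t))"
      using pm_decomp[OF E(1), of y] unfolding comp_def by blast
    define U where "U = {t \<in> Tx. comp x (- t) \<notin> P}"
    define V where "V = {t \<in> Ty. comp y (- t) \<notin> P}"
    have U: "finite U" "U \<noteq> {}" "\<forall>u\<in>U. \<forall>u'\<in>U. u - u' \<in> E \<longrightarrow> u = u'"
      using Tx(1,3) nonempty[of x Tx] nxy Tx(4) unfolding U_def by auto
    have V: "finite V" "V \<noteq> {}" "\<forall>u\<in>V. \<forall>u'\<in>V. u - u' \<in> E \<longrightarrow> u = u'"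
      using Ty(1,3) nonempty[of y Ty] nxy Ty(4) unfolding V_def by auto
    obtain t0 s0 where ts0: "t0 \<in> U" "s0 \<in> V"
      "\<forall>u\<in>U. \<forall>v\<in>V. u + v - (t0 + s0) \<in> E \<longrightarrow> u = t0 \<and> v = s0"
      using upp[OF E fr U V] by blast
    define c where "c = - (t0 + s0)"
    define trm where "trm p = proj E (single (c + fst p + snd p) 1 * (comp x (- fst p) * comp y (- snd p)))"
      for p :: "'a \<times> 'a"
    have prodE: "keys (comp x (- fst p) * comp y (- snd p)) \<subseteq> E" for p
      using galg_mult[OF E(1), of "comp x (- fst p)" "comp y (- snd p)"] compE by (simp add: galg_iff)
    have "single c 1 * (x * y) = (\<Sum>p\<in>Tx \<times> Ty. single (c + fst p + snd p) 1 * (comp x (- fst p) * comp y (- snd p)))"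
    proof -
      have "single c 1 * (x * y) = (\<Sum>t\<in>Tx. \<Sum>s\<in>Ty. single c 1 * ((single t 1 * comp x (- t)) * (single s 1 * comp y (- s))))"
      proof -
        have "x * y = (\<Sum>t\<in>Tx. single t 1 * comp x (- t)) * (\<Sum>s\<in>Ty. single s 1 * comp y (- s))"
          by (rule arg_cong2[where f="(*)", OF Tx(5) Ty(5)])
        then have "x * y = (\<Sum>t\<in>Tx. \<Sum>s\<in>Ty. (single t 1 * comp x (- t)) * (single s 1 * comp y (- s)))"
          by (simp only: sum_product)
        then show ?thesis by (simp only: sum_distrib_left)
      qed
      also have "\<dots> = (\<Sum>t\<in>Tx. \<Sum>s\<in>Ty. single (c + t + s) 1 * (comp x (- t) * comp y (- s)))"
      proof (intro sum.cong refl)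
        fix t s
        have "single c 1 * ((single t 1 * comp x (- t)) * (single s 1 * comp y (- s)))
            = (single c 1 * single t 1 * single s 1) * (comp x (- t) * comp y (- s))"
          by (simp only: mult_ac)
        then show "single c 1 * ((single t 1 * comp x (- t)) * (single s 1 * comp y (- s)))
            = single (c + t + s) 1 * (comp x (- t) * comp y (- s))"
          by (simp add: mult_single)
      qed
      also have "\<dots> = (\<Sum>p\<in>Tx \<times> Ty. single (c + fst p + snd p) 1 * (comp x (- fst p) * comp y (- snd p)))"
        by (simp add: sum.cartesian_product case_prod_beta)
      finally show ?thesis .
    qed
    then have "proj E (single c 1 * (x * y)) = (\<Sum>p\<in>Tx \<times> Ty. proj E (single (c + fst p + snd p) 1 * (comp x (- fst p) * comp y (- snd p))))"
      by (simp only: proj_sum)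
    then have cxy: "comp (x * y) c = (\<Sum>p\<in>Tx \<times> Ty. trm p)"
      unfolding trm_def by (simp only: comp_def)
    have "comp (x * y) c \<in> P" using xy mem unfolding comp_def by blast
    have p0: "(t0, s0) \<in> Tx \<times> Ty" using ts0 unfolding U_def V_def by auto
    have fin: "finite (Tx \<times> Ty)" using Tx(1) Ty(1) by simp
    have t0: "trm (t0, s0) = comp x (- t0) * comp y (- s0)"
    proof -
      have "c + t0 + s0 = 0" unfolding c_def by simp
      then show ?thesis unfolding trm_def using proj_term[OF E(1) prodE[of "(t0, s0)"], of 0] subgrpD(1)[OF E(1)] by simp
    qed
    have rest: "trm p \<in> P" if p: "p \<in> Tx \<times> Ty - {(t0, s0)}" for p
    proof (cases "c + fst p + snd p \<in> E")
      case False
      then show ?thesis unfolding trm_def using proj_term[OF E(1) prodE[of p]] is_idealD(1)[OF Pid] by simp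
    next
      case True
      have tp: "trm p = single (c + fst p + snd p) 1 * (comp x (- fst p) * comp y (- snd p))"
        unfolding trm_def using proj_term[OF E(1) prodE[of p]] True by simp
      show ?thesis
      proof (cases "comp x (- fst p) \<in> P \<or> comp y (- snd p) \<in> P")
        case True
        then have "comp x (- fst p) * comp y (- snd p) \<in> P"
          using Pid by (auto intro: is_idealD(3) is_idealD(4))
        then show ?thesis unfolding tp using Pid by (rule is_idealD(3)[rotated])
      next
        case False
        then have "fst p \<in> U" "snd p \<in> V" using p unfolding U_def V_def by auto
        moreover have "fst p + snd p - (t0 + s0) \<in> E" using True unfolding c_def by (simp add: algebra_simps)
        ultimately have "fst p = t0 \<and> snd p = s0" using ts0(3) by blast
        then have "p = (t0, s0)" by (cases p) auto
        then show ?thesis using p by simp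
      qed
    qed
    have "(\<Sum>p\<in>Tx \<times> Ty. trm p) = trm (t0, s0) + (\<Sum>p\<in>Tx \<times> Ty - {(t0, s0)}. trm p)"
      using fin p0 by (simp add: sum.remove)
    moreover have "(\<Sum>p\<in>Tx \<times> Ty - {(t0, s0)}. trm p) \<in> P" using rest Pid by (intro is_ideal_sum) auto
    ultimately have "comp x (- t0) * comp y (- s0) \<in> P"
      using \<open>comp (x * y) c \<in> P\<close> cxy t0 is_ideal_diff[OF Pid] by (metis add_diff_cancel_right')
    then show False using ts0(1,2) P unfolding U_def V_def prime_ideal_def by blast
  qed
  moreover have "J \<noteq> UNIV" using JP prime_idealD(2)[OF P] by blast
  ultimately show ?thesis using Jid unfolding J_def prime_ideal_def by blast
qed



lemma main_lemma:
  fixes P :: "('a::ab_group_add \<Rightarrow>\<^sub>0 'k::comm_ring_1) set"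
  assumes fr: "finite_rank (UNIV :: 'a set)" and P: "prime_ideal P" and B: "subgrp B" "dense B"
  shows "controller B (galg B \<inter> P) \<subseteq> controller UNIV P \<and>
         controller UNIV P \<subseteq> isol (controller B (galg B \<inter> P))"
proof -
  define C where "C = controller UNIV P"
  define Q where "Q = galg B \<inter> P"
  define D where "D = controller B Q"
  have Pid: "is_ideal P" using prime_idealD(1)[OF P] .
  have PI: "is_ideal_in (galg UNIV) P" using Pid by (rule is_ideal_in_UNIV)
  have QI: "is_ideal_in (galg B) Q" unfolding Q_def using Pid B(1) by (rule galg_ideal)
  have Cc: "controls UNIV P C" unfolding C_def using controller_controls[OF subgrp_UNIV PI] .
  have Cs: "subgrp C" unfolding C_def by (rule controller_subgrp)
  have Cproj: "\<forall>f\<in>P. proj C f \<in> P" using controls_proj[OF subgrp_UNIV PI Cs] Cc by simp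
  have Dc: "controls B Q D" unfolding D_def using controller_controls[OF B(1) QI] .
  have Ds: "subgrp D" unfolding D_def by (rule controller_subgrp)
  have DB: "D \<subseteq> B" unfolding D_def using controller_sub[OF B(1) QI] .
  have CBs: "subgrp (C \<inter> B)" using Cs B(1) by (rule subgrp_Int)
  have "\<forall>f\<in>Q. proj (C \<inter> B) f \<in> Q"
  proof
    fix f assume f: "f \<in> Q"
    then have kB: "keys f \<subseteq> B" unfolding Q_def by (simp add: galg_iff)
    then have "proj (C \<inter> B) f = proj C f" by (intro proj_cong) blast
    moreover have "proj C f \<in> P" using Cproj f unfolding Q_def by blast
    moreover have "proj C f \<in> galg B" using kB by (intro galg_proj) blast
    ultimately show "proj (C \<inter> B) f \<in> Q" unfolding Q_def by simp
  qed
  then have "controls B Q (C \<inter> B)" using controls_proj[OF B(1) QI CBs] by blast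
  then have DC: "D \<subseteq> C" unfolding D_def using controller_least[OF CBs] by blast
  define E where "E = isol D"
  have Es: "subgrp E" unfolding E_def using Ds by (rule isol_subgrp)
  have Ei: "isol E = E" unfolding E_def by (rule isol_isol)
  have DE: "D \<subseteq> E" unfolding E_def by (rule subset_isol)
  define J where "J = ideal_gen_in UNIV (P \<inter> galg E)"
  have Jp: "prime_ideal J" unfolding J_def using gen_prime[OF P Es Ei fr] .
  have JP: "J \<subseteq> P" unfolding J_def using Pid by (intro gen_subset) (auto simp: is_ideal_def)
  have EBs: "subgrp (E \<inter> B)" using Es B(1) by (rule subgrp_Int)
  have "controls B Q (E \<inter> B)" using controls_mono[OF QI Dc] DE DB by blast
  then have "Q = ideal_gen_in (galg B) (Q \<inter> galg (E \<inter> B))" unfolding controls_def .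
  also have "\<dots> \<subseteq> J" unfolding J_def
    by (rule gen_mono) (auto simp: Q_def galg_iff)
  finally have QJ: "galg B \<inter> P \<subseteq> J" unfolding Q_def .
  have "P \<subseteq> J" using incomparability[OF Jp Pid JP QJ B] .
  then have "P = J" using JP by blast
  then have "controls UNIV P E" unfolding controls_def J_def by simp
  then have "C \<subseteq> E" unfolding C_def using controller_least[OF Es] by blast
  then show ?thesis using DC unfolding C_def D_def Q_def E_def by blast
qed

definition rkset :: "'a::ab_group_add set \<Rightarrow> nat set" where
  "rkset X = {card F | F. finite F \<and> F \<subseteq> X \<and> z_indep F}"

lemma rkset_ne: "rkset X \<noteq> {}"
proof -
  have "z_indep ({} :: 'a set)" by (simp add: z_indep_def)
  then have "card ({} :: 'a set) \<in> rkset X" unfolding rkset_def by blast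
  then show ?thesis by blast
qed

lemma rkset_bdd:
  assumes "finite_rank (UNIV :: 'a::ab_group_add set)"
  shows "bdd_above (rkset (X :: 'a set))"
proof -
  obtain N where N: "\<forall>F. finite F \<and> F \<subseteq> (UNIV :: 'a set) \<and> z_indep F \<longrightarrow> card F \<le> N"
    using assms unfolding finite_rank_def by (elim exE) (rule that)
  show ?thesis unfolding rkset_def bdd_above_def using N by blast
qed

lemma tf_rank_rkset: "tf_rank X = Sup (rkset X)"
  unfolding tf_rank_def rkset_def ..

lemma rank_mono:
  assumes "finite_rank (UNIV :: 'a::ab_group_add set)" "X \<subseteq> (Y :: 'a set)"
  shows "tf_rank X \<le> tf_rank Y"
  unfolding tf_rank_rkset
  by (rule cSup_subset_mono[OF rkset_ne rkset_bdd[OF assms(1)]]) (use assms(2) in \<open>auto simp: rkset_def\<close>)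

lemma rank_isol:
  assumes fr: "finite_rank (UNIV :: 'a::ab_group_add set)"
  shows "tf_rank (isol X) \<le> tf_rank (X :: 'a set)"
  unfolding tf_rank_rkset
proof (rule cSup_mono[OF rkset_ne rkset_bdd[OF fr]])
  fix b assume "b \<in> rkset (isol X)"
  then obtain F where F: "b = card F" "finite F" "F \<subseteq> isol X" "z_indep F"
    unfolding rkset_def by blast
  have "\<forall>x\<in>F. \<exists>m. m \<ge> 1 \<and> nmult m x \<in> X" using F(3) unfolding isol_def by blast
  then obtain m where m: "\<And>x. x \<in> F \<Longrightarrow> m x \<ge> 1 \<and> nmult (m x) x \<in> X" by metis
  define g where "g x = nmult (m x) x" for x
  have inj: "inj_on g F"
  proof (rule inj_onI, rule ccontr)
    fix x y assume x: "x \<in> F" and y: "y \<in> F" and gxy: "g x = g y" and xy: "x \<noteq> y"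
    define c where "c z = (if z = x then int (m x) else if z = y then - int (m y) else 0)" for z
    have "(\<Sum>z\<in>F. zmult (c z) z) = (\<Sum>z\<in>F. (if z = x then nmult (m x) x else 0) + (if z = y then - nmult (m y) y else 0))"
      unfolding c_def using xy by (intro sum.cong refl) (auto simp: zmult_uminus_left)
    also have "\<dots> = g x - g y" unfolding g_def using x y F(2) by (simp add: sum.distrib)
    also have "\<dots> = 0" using gxy by simp
    finally have "c x = 0" using F(4) x unfolding z_indep_def by blast
    then show False using m[OF x] unfolding c_def by simp
  qed
  have indep: "z_indep (g ` F)" unfolding z_indep_def
  proof (intro allI impI)
    fix c' assume h: "(\<Sum>w\<in>g ` F. zmult (c' w) w) = 0"
    have "(\<Sum>w\<in>g ` F. zmult (c' w) w) = (\<Sum>x\<in>F. zmult (c' (g x)) (g x))"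
      using sum.reindex[OF inj] by simp
    also have "\<dots> = (\<Sum>x\<in>F. zmult (c' (g x) * int (m x)) x)"
      unfolding g_def by (simp add: zmult_nmult_inner)
    finally have "\<forall>x\<in>F. c' (g x) * int (m x) = 0" using h F(4) unfolding z_indep_def by metis
    then have "\<forall>x\<in>F. c' (g x) = 0" using m by fastforce
    then show "\<forall>w\<in>g ` F. c' w = 0" by blast
  qed
  have "card (g ` F) = b" using card_image[OF inj] F(1) by simp
  moreover have "g ` F \<subseteq> X" using m unfolding g_def by blast
  ultimately show "\<exists>a\<in>rkset X. b \<le> a" unfolding rkset_def using indep F(2) by blast
qed

lemma rank_eq:
  assumes fr: "finite_rank (UNIV :: 'a::ab_group_add set)" and "D \<subseteq> (C :: 'a set)" "C \<subseteq> isol D"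
  shows "tf_rank C = tf_rank D"
  using rank_mono[OF fr assms(2)] rank_mono[OF fr assms(3)] rank_isol[OF fr, of D] by simp



section \<open>Transport along automorphisms\<close>

abbreviation ivs where "ivs f \<equiv> inv_into UNIV f"

definition pmap :: "('a \<Rightarrow> 'a) \<Rightarrow> ('a \<Rightarrow>\<^sub>0 'k::zero) \<Rightarrow> ('a \<Rightarrow>\<^sub>0 'k)" where
  "pmap \<sigma> f = Abs_poly_mapping (\<lambda>b. lookup f (ivs \<sigma> b))"

locale addbij =
  fixes \<sigma> :: "'a::ab_group_add \<Rightarrow> 'a"
  assumes bij: "bij \<sigma>" and add: "\<And>x y. \<sigma> (x + y) = \<sigma> x + \<sigma> y"
begin

lemma inv_l [simp]: "ivs \<sigma> (\<sigma> x) = x" using bij by (simp add: bij_is_inj)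
lemma inv_r [simp]: "\<sigma> (ivs \<sigma> x) = x" using bij by (simp add: bij_is_surj surj_f_inv_f)

lemma zero [simp]: "\<sigma> 0 = 0" using add[of 0 0] by simp

lemma inv_add: "ivs \<sigma> (x + y) = ivs \<sigma> x + ivs \<sigma> y"
proof -
  have "\<sigma> (ivs \<sigma> x + ivs \<sigma> y) = x + y" by (simp add: add)
  then show ?thesis by (metis inv_l)
qed

lemma inv_addbij: "addbij (ivs \<sigma>)"
  by unfold_locales (simp_all add: bij bij_imp_bij_inv inv_add)

lemma inv_inv [simp]: "ivs (ivs \<sigma>) = \<sigma>" using bij by (simp add: inv_inv_eq)

lemma uminus: "\<sigma> (- x) = - \<sigma> x"
proof -
  have "\<sigma> x + \<sigma> (- x) = 0" using add[of x "- x"] by simp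
  then show ?thesis by (simp add: add_eq_0_iff)
qed

lemma diff: "\<sigma> (x - y) = \<sigma> x - \<sigma> y" using add[of x "- y"] uminus[of y] by simp

lemma lookup_pmap: "lookup (pmap \<sigma> f) b = lookup f (ivs \<sigma> b)"
proof -
  have "{b. lookup f (ivs \<sigma> b) \<noteq> 0} = \<sigma> ` {a. lookup f a \<noteq> 0}"
    by (auto simp: image_iff) (metis inv_r)
  then have "finite {b. lookup f (ivs \<sigma> b) \<noteq> 0}" by simp
  then show ?thesis unfolding pmap_def by simp
qed

lemma pmap_add: "pmap \<sigma> (f + g) = pmap \<sigma> f + pmap \<sigma> (g :: 'a \<Rightarrow>\<^sub>0 'k::comm_ring_1)"
  by (rule poly_mapping_eqI) (simp add: lookup_pmap lookup_add)

lemma pmap_0 [simp]: "pmap \<sigma> 0 = 0"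
  by (rule poly_mapping_eqI) (simp add: lookup_pmap)

lemma pmap_sum: "pmap \<sigma> (sum g S) = (\<Sum>x\<in>S. pmap \<sigma> (g x :: 'a \<Rightarrow>\<^sub>0 'k::comm_ring_1))"
  by (induction S rule: infinite_finite_induct) (simp_all add: pmap_add)

lemma pmap_single: "pmap \<sigma> (single a c) = single (\<sigma> a) c"
proof (rule poly_mapping_eqI)
  fix b
  have "(a = ivs \<sigma> b) = (\<sigma> a = b)" by (metis inv_l inv_r)
  then show "lookup (pmap \<sigma> (single a c)) b = lookup (single (\<sigma> a) c) b"
    by (simp add: lookup_pmap lookup_single when_def)
qed

lemma pmap_mult: "pmap \<sigma> (f * g) = pmap \<sigma> f * pmap \<sigma> (g :: 'a \<Rightarrow>\<^sub>0 'k::comm_ring_1)"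
proof -
  have fg: "f * g = (\<Sum>a\<in>keys f. \<Sum>b\<in>keys g. single (a + b) (lookup f a * lookup g b))"
  proof -
    have "f * g = (\<Sum>a\<in>keys f. single a (lookup f a)) * (\<Sum>b\<in>keys g. single b (lookup g b))"
      by (rule arg_cong2[where f="(*)", OF pm_expand pm_expand])
    then show ?thesis by (simp only: sum_product mult_single)
  qed
  have pf: "pmap \<sigma> f = (\<Sum>a\<in>keys f. single (\<sigma> a) (lookup f a))"
    by (subst pm_expand[of f]) (simp only: pmap_sum pmap_single)
  have pg: "pmap \<sigma> g = (\<Sum>b\<in>keys g. single (\<sigma> b) (lookup g b))"
    by (subst pm_expand[of g]) (simp only: pmap_sum pmap_single)
  show ?thesis unfolding fg pf pg
    by (simp only: pmap_sum pmap_single sum_product mult_single add)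
qed

lemma pmap_one: "pmap \<sigma> (1 :: 'a \<Rightarrow>\<^sub>0 'k::comm_ring_1) = 1"
  using pmap_single[of 0 "1::'k"] by simp

lemma pmap_inv_pmap [simp]: "pmap (ivs \<sigma>) (pmap \<sigma> f) = f"
  by (rule poly_mapping_eqI) (simp add: lookup_pmap addbij.lookup_pmap[OF inv_addbij])

lemma pmap_pmap_inv [simp]: "pmap \<sigma> (pmap (ivs \<sigma>) f) = f"
  by (rule poly_mapping_eqI) (simp add: lookup_pmap addbij.lookup_pmap[OF inv_addbij])

lemma ideal_image_eq: "ideal_image \<sigma> P = pmap \<sigma> ` P"
proof
  show "ideal_image \<sigma> P \<subseteq> pmap \<sigma> ` P"
  proof
    fix g assume "g \<in> ideal_image \<sigma> P"
    then obtain f where f: "f \<in> P" "\<forall>a. lookup g (\<sigma> a) = lookup f a" unfolding ideal_image_def by blast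
    have "g = pmap \<sigma> f"
    proof (rule poly_mapping_eqI)
      fix b show "lookup g b = lookup (pmap \<sigma> f) b" using f(2)[rule_format, of "ivs \<sigma> b"]
        by (simp add: lookup_pmap)
    qed
    then show "g \<in> pmap \<sigma> ` P" using f(1) by blast
  qed
  show "pmap \<sigma> ` P \<subseteq> ideal_image \<sigma> P"
    unfolding ideal_image_def by (auto simp: lookup_pmap)
qed

lemma prime_pmap:
  fixes P :: "('a \<Rightarrow>\<^sub>0 'k::comm_ring_1) set"
  assumes P: "prime_ideal P"
  shows "prime_ideal (pmap \<sigma> ` P)"
proof -
  have Pid: "is_ideal P" using prime_idealD(1)[OF P] .
  have "is_ideal (pmap \<sigma> ` P)" unfolding is_ideal_def is_ideal_in_def
  proof (intro conjI ballI)
    show "0 \<in> pmap \<sigma> ` P" using is_idealD(1)[OF Pid] pmap_0 by (metis image_eqI)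
    fix x y assume "x \<in> pmap \<sigma> ` P" "y \<in> pmap \<sigma> ` P"
    then obtain x' y' where "x' \<in> P" "y' \<in> P" "x = pmap \<sigma> x'" "y = pmap \<sigma> y'" by blast
    then show "x + y \<in> pmap \<sigma> ` P" using is_idealD(2)[OF Pid] pmap_add by (metis image_eqI)
  next
    fix x r assume "x \<in> pmap \<sigma> ` P"
    then obtain x' where x': "x' \<in> P" "x = pmap \<sigma> x'" by blast
    have "r * x = pmap \<sigma> (pmap (ivs \<sigma>) r * x')" using x'(2) by (simp add: pmap_mult)
    then show "r * x \<in> pmap \<sigma> ` P" using is_idealD(3)[OF Pid x'(1)] by blast
  qed simp
  moreover have "pmap \<sigma> ` P \<noteq> UNIV"
  proof
    assume "pmap \<sigma> ` P = UNIV"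
    then obtain x where "x \<in> P" "pmap \<sigma> x = 1" by (metis UNIV_I imageE)
    then have "x = 1" using pmap_inv_pmap[of x] addbij.pmap_one[OF inv_addbij] by metis
    then show False using prime_idealD(4)[OF P] \<open>x \<in> P\<close> by simp
  qed
  moreover have "\<forall>x y. x * y \<in> pmap \<sigma> ` P \<longrightarrow> x \<in> pmap \<sigma> ` P \<or> y \<in> pmap \<sigma> ` P"
  proof (intro allI impI)
    fix x y assume "x * y \<in> pmap \<sigma> ` P"
    then obtain w where w: "w \<in> P" "x * y = pmap \<sigma> w" by blast
    then have "pmap (ivs \<sigma>) x * pmap (ivs \<sigma>) y \<in> P"
      using addbij.pmap_mult[OF inv_addbij, of x y] by simp
    then have "pmap (ivs \<sigma>) x \<in> P \<or> pmap (ivs \<sigma>) y \<in> P" using P unfolding prime_ideal_def by blast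
    then show "x \<in> pmap \<sigma> ` P \<or> y \<in> pmap \<sigma> ` P" by (metis image_eqI pmap_pmap_inv)
  qed
  ultimately show ?thesis unfolding prime_ideal_def by blast
qed

lemma subgrp_image: "subgrp H \<Longrightarrow> subgrp (\<sigma> ` H)"
  unfolding subgrp_def by (auto simp: diff[symmetric] intro!: image_eqI[of _ \<sigma> 0])

lemma proj_pmap: "proj (\<sigma> ` H) (pmap \<sigma> f) = pmap \<sigma> (proj H f)"
proof (rule poly_mapping_eqI)
  fix b
  have "(b \<in> \<sigma> ` H) = (ivs \<sigma> b \<in> H)" by (metis image_iff inv_l inv_r)
  then show "lookup (proj (\<sigma> ` H) (pmap \<sigma> f)) b = lookup (pmap \<sigma> (proj H f)) b"
    by (simp add: lookup_proj lookup_pmap)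
qed

lemma controls_pmap:
  fixes P :: "('a \<Rightarrow>\<^sub>0 'k::comm_ring_1) set"
  assumes P: "is_ideal P" "is_ideal (pmap \<sigma> ` P)" and H: "subgrp H" and c: "controls UNIV P H"
  shows "controls UNIV (pmap \<sigma> ` P) (\<sigma> ` H)"
proof -
  have "\<forall>f\<in>P. proj H f \<in> P" using controls_proj[OF subgrp_UNIV is_ideal_in_UNIV[OF P(1)] H] c by simp
  then have "\<forall>g\<in>pmap \<sigma> ` P. proj (\<sigma> ` H) g \<in> pmap \<sigma> ` P" by (auto simp: proj_pmap)
  then show ?thesis
    using controls_proj[OF subgrp_UNIV is_ideal_in_UNIV[OF P(2)] subgrp_image[OF H]] by simp
qed

end

lemma controller_image:
  fixes P :: "('a::ab_group_add \<Rightarrow>\<^sub>0 'k::comm_ring_1) set"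
  assumes s: "addbij \<sigma>" and P: "prime_ideal P"
  shows "\<sigma> ` controller UNIV P \<subseteq> controller UNIV (pmap \<sigma> ` P)"
proof -
  interpret s: addbij \<sigma> by (rule s)
  interpret t: addbij "ivs \<sigma>" by (rule s.inv_addbij)
  have P': "prime_ideal (pmap \<sigma> ` P)" by (rule s.prime_pmap[OF P])
  have bk: "pmap (ivs \<sigma>) ` pmap \<sigma> ` P = P" by (simp add: image_image)
  show ?thesis unfolding controller_def[of UNIV "pmap \<sigma> ` P"]
  proof (intro subsetI InterI)
    fix y H assume y: "y \<in> \<sigma> ` controller UNIV P" and H: "H \<in> {H. subgrp H \<and> H \<subseteq> UNIV \<and> controls UNIV (pmap \<sigma> ` P) H}"
    then have Hs: "subgrp H" and Hc: "controls UNIV (pmap \<sigma> ` P) H" by auto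
    have "controls UNIV (pmap (ivs \<sigma>) ` pmap \<sigma> ` P) (ivs \<sigma> ` H)"
      using t.controls_pmap[OF prime_idealD(1)[OF P'] _ Hs Hc] bk prime_idealD(1)[OF P] by simp
    then have "controls UNIV P (ivs \<sigma> ` H)" using bk by simp
    then have "controller UNIV P \<subseteq> ivs \<sigma> ` H"
      using controller_least[OF t.subgrp_image[OF Hs]] by blast
    then show "y \<in> H" using y by (auto simp: image_iff)
  qed
qed



lemma isol_controller_eq:
  fixes Q :: "('a::ab_group_add \<Rightarrow>\<^sub>0 'k::comm_ring_1) set"
  assumes fr: "finite_rank (UNIV :: 'a set)" and Q: "prime_ideal Q" and B: "subgrp B" "dense B"
  shows "isol (controller UNIV Q) = isol (controller B (galg B \<inter> Q))"
proof -
  have m: "controller B (galg B \<inter> Q) \<subseteq> controller UNIV Q"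
    "controller UNIV Q \<subseteq> isol (controller B (galg B \<inter> Q))"
    using main_lemma[OF fr Q B] by auto
  show ?thesis
  proof
    show "isol (controller UNIV Q) \<subseteq> isol (controller B (galg B \<inter> Q))"
      using isol_mono[OF m(2)] isol_isol by blast
    show "isol (controller B (galg B \<inter> Q)) \<subseteq> isol (controller UNIV Q)"
      using isol_mono[OF m(1)] .
  qed
qed

theorem lemma4p1:
  fixes G :: "('g, 'b) monoid_scheme"
    and act :: "'g \<Rightarrow> 'a::ab_group_add \<Rightarrow> 'a"
    and P :: "('a \<Rightarrow>\<^sub>0 'k::field) set"
  assumes "torsion_free (UNIV :: 'a set)"
    and "finite_rank (UNIV :: 'a set)"
    and "aut_action G act"
    and "prime_ideal P"
    and "faithful P"
  shows "(\<forall>B. subgrp B \<and> dense B \<longrightarrow>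
            tf_rank (controller UNIV P) = tf_rank (controller B (galg B \<inter> P)))
       \<and> (standardiser G act P = carrier G \<longrightarrow>
            subgrp (isol (controller UNIV P)) \<and>
            (\<forall>\<gamma>\<in>carrier G. act \<gamma> ` isol (controller UNIV P) \<subseteq> isol (controller UNIV P)))"
proof (intro conjI allI impI ballI)
  note fr = assms(2) and P = assms(4)
  fix B :: "'a set" assume "subgrp B \<and> dense B"
  then have B: "subgrp B" "dense B" by auto
  show "tf_rank (controller UNIV P) = tf_rank (controller B (galg B \<inter> P))"
    using main_lemma[OF fr P B] rank_eq[OF fr] by blast
next
  show "subgrp (isol (controller UNIV P))" by (intro isol_subgrp controller_subgrp)
next
  note fr = assms(2) and P = assms(4)
  fix \<gamma> assume std: "standardiser G act P = carrier G" and g: "\<gamma> \<in> carrier G"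
  then have "\<gamma> \<in> standardiser G act P" by simp
  then obtain B where B: "subgrp B" "dense B" "P \<inter> galg B = ideal_image (act \<gamma>) P \<inter> galg B"
    unfolding standardiser_def by blast
  have s: "addbij (act \<gamma>)" using assms(3) g unfolding aut_action_def addbij_def by blast
  interpret s: addbij "act \<gamma>" by (rule s)
  define P' where "P' = pmap (act \<gamma>) ` P"
  have P': "prime_ideal P'" unfolding P'_def by (rule s.prime_pmap[OF P])
  have eqB: "galg B \<inter> P' = galg B \<inter> P" using B(3) unfolding P'_def s.ideal_image_eq by blast
  have "isol (controller UNIV P) = isol (controller B (galg B \<inter> P))"
    by (rule isol_controller_eq[OF fr P B(1,2)])
  also have "\<dots> = isol (controller UNIV P')"
    using isol_controller_eq[OF fr P' B(1,2)] eqB by simp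
  finally have e: "isol (controller UNIV P) = isol (controller UNIV P')" .
  have "act \<gamma> ` isol (controller UNIV P) \<subseteq> isol (act \<gamma> ` controller UNIV P)"
    by (rule isol_image) (rule s.add)
  also have "\<dots> \<subseteq> isol (controller UNIV P')"
    unfolding P'_def by (rule isol_mono[OF controller_image[OF s P]])
  finally show "act \<gamma> ` isol (controller UNIV P) \<subseteq> isol (controller UNIV P)" using e by simp
qed


end
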